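(* Let $\epsilon_1,\epsilon_2>0$ with $\epsilon_1<\min(\epsilon_1^*,1/K_m)$ and $\epsilon_2<\min(\epsilon_2^*,1/K_m)$. Then the operator $\mathcal{A}_1:D(\mathcal{A}_1)\to\mathcal{H}$ is dissipative with respect to $\langle\cdot,\cdot\rangle_{\mathcal{H},2}$, i.e. $\langle\mathcal{A}_1X,X\rangle_{\mathcal{H},2}\le 0$ for all $X\in D(\mathcal{A}_1)$.
   Context: Let $l>0$. For a Lebesgue measurable $f:(0,l)\to\mathbb{R}$, $\overline{f}$ and $\underline{f}$ denote its essential supremum and essential infimum on $(0,l)$ (so e.g. $\underline{\eta_\omega EI}$ is the essential infimum of the product $\eta_\omega EI$). Let $\rho, I_w, EI, GJ, \eta_\omega, \eta_\phi \in L^\infty(0,l)$ with $\underline{\rho},\underline{I_w},\underline{EI},\underline{GJ},\underline{\eta_\omega},\underline{\eta_\phi}>0$, and let $k_1,k_2\ge 0$. Elements of $H^1(0,l)$ are identified with their absolutely continuous representatives. $\mathcal{H}=\{(f,g,h,z)\in H^2(0,l)\times L^2(0,l)\times H^1(0,l)\times L^2(0,l): f(0)=f'(0)=0,\ h(0)=0\}$, $\langle (f_1,g_1,h_1,z_1),(f_2,g_2,h_2,z_2)\rangle_{\mathcal{H},1}=\int_0^l [EI f_1''f_2''+\rho g_1g_2+GJ h_1'h_2'+I_w z_1z_2]\,\mathrm{d}y$, and $\langle X_1,X_2\rangle_{\mathcal{H},2}=\langle X_1,X_2\rangle_{\mathcal{H},1}+\epsilon_1\int_0^l\rho(f_1g_2+g_1f_2)\,\mathrm{d}y+\epsilon_2\int_0^l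 I_w(h_1z_2+z_1h_2)\,\mathrm{d}y$ for $X_i=(f_i,g_i,h_i,z_i)$. $K_m=\max\big(\sqrt{\overline{\rho}},\ \tfrac{16l^4\sqrt{\overline{\rho}}}{\pi^4\underline{EI}},\ \sqrt{\overline{I_w}},\ \tfrac{4l^2\sqrt{\overline{I_w}}}{\pi^2\underline{GJ}}\big)$, $\epsilon_1^*=\dfrac{4\pi^4\underline{\eta_\omega EI}}{64l^4\overline{\rho}+\pi^4\overline{\eta_\omega}\,\underline{\eta_\omega EI}}$, $\epsilon_2^*=\dfrac{4\pi^2\underline{\eta_\phi GJ}}{16l^2\overline{I_w}+\pi^2\overline{\eta_\phi}\,\underline{\eta_\phi GJ}}$. $D(\mathcal{A}_1)$ is the set of $(f,g,h,z)\in\mathcal{H}$ with $g\in H^2(0,l)$, $z\in H^1(0,l)$, $EIf''+\eta_\omega EI g''\in H^2(0,l)$, $GJh'+\eta_\phi GJ z'\in H^1(0,l)$, $g(0)=g'(0)=0$, $z(0)=0$, $(EIf''+\eta_\omega EI g'')(l)=0$, $(EIf''+\eta_\omega EIg'')'(l)=k_1(g(l)+\epsilon_1 f(l))$, $(GJh'+\eta_\phi GJ z')(l)=-k_2(z(l)+\epsilon_2 h(l))$; and $\mathcal{A}_1(f,g,h,z)=\big(g,\,-\tfrac{1}{\rho}(EIf''+\eta_\omega EIg'')'',\,z,\,\tfrac{1}{I_w}(GJh'+\eta_\phi GJ z')'\big)$. *)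

theory Defs
  imports "HOL-Analysis.Analysis"
begin

definition Iv :: "real \<Rightarrow> real measure" where
  "Iv l = lebesgue_on {0<..<l}"

definition L2 :: "real \<Rightarrow> (real \<Rightarrow> real) \<Rightarrow> bool" where
  "L2 l f \<longleftrightarrow> f \<in> borel_measurable (Iv l) \<and> integrable (Iv l) (\<lambda>x. (f x)\<^sup>2)"

definition Linf :: "real \<Rightarrow> (real \<Rightarrow> real) \<Rightarrow> bool" where
  "Linf l f \<longleftrightarrow> f \<in> borel_measurable (Iv l) \<and> (\<exists>C. AE x in Iv l. \<bar>f x\<bar> \<le> C)"

definition ess_sup :: "real \<Rightarrow> (real \<Rightarrow> real) \<Rightarrow> real" where
  "ess_sup l f = Inf {c. AE x in Iv l. f x \<le> c}"

definition ess_inf :: "real \<Rightarrow> (real \<Rightarrow> real) \<Rightarrow> real" where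
  "ess_inf l f = Sup {c. AE x in Iv l. c \<le> f x}"

text \<open>F is absolutely continuous on [0,l] with derivative G in L2(0,l).\<close>
definition has_weak_deriv :: "real \<Rightarrow> (real \<Rightarrow> real) \<Rightarrow> (real \<Rightarrow> real) \<Rightarrow> bool" where
  "has_weak_deriv l F G \<longleftrightarrow> L2 l G \<and>
     (\<forall>x\<in>{0..l}. F x = F 0 + integral\<^sup>L (lebesgue_on {0..x}) G)"

definition is_AC_rep :: "real \<Rightarrow> (real \<Rightarrow> real) \<Rightarrow> (real \<Rightarrow> real) \<Rightarrow> bool" where
  "is_AC_rep l F Fr \<longleftrightarrow> (AE x in Iv l. F x = Fr x) \<and> (\<exists>G. has_weak_deriv l Fr G)"

definition H1 :: "real \<Rightarrow> (real \<Rightarrow> real) \<Rightarrow> bool" where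
  "H1 l F \<longleftrightarrow> L2 l F \<and> (\<exists>Fr. is_AC_rep l F Fr)"

text \<open>The absolutely continuous representative (values on [0,l] are unique).\<close>
definition rep :: "real \<Rightarrow> (real \<Rightarrow> real) \<Rightarrow> (real \<Rightarrow> real)" where
  "rep l F = (SOME Fr. is_AC_rep l F Fr)"

text \<open>Weak derivative (unique up to a.e. equality).\<close>
definition wderiv :: "real \<Rightarrow> (real \<Rightarrow> real) \<Rightarrow> (real \<Rightarrow> real)" where
  "wderiv l F = (SOME G. has_weak_deriv l (rep l F) G)"

definition H2 :: "real \<Rightarrow> (real \<Rightarrow> real) \<Rightarrow> bool" where
  "H2 l F \<longleftrightarrow> H1 l F \<and> H1 l (wderiv l F)"

type_synonym state = "(real \<Rightarrow> real) \<times> (real \<Rightarrow> real) \<times> (real \<Rightarrow> real) \<times> (real \<Rightarrow> real)"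

definition Hspace :: "real \<Rightarrow> state set" where
  "Hspace l = {(f,g,h,z). H2 l f \<and> L2 l g \<and> H1 l h \<and> L2 l z \<and>
      rep l f 0 = 0 \<and> rep l (wderiv l f) 0 = 0 \<and> rep l h 0 = 0}"

definition ip1 :: "real \<Rightarrow> (real \<Rightarrow> real) \<Rightarrow> (real \<Rightarrow> real) \<Rightarrow> (real \<Rightarrow> real) \<Rightarrow> (real \<Rightarrow> real)
    \<Rightarrow> state \<Rightarrow> state \<Rightarrow> real" where
  "ip1 l EI \<rho> GJ Iw X Y = (case X of (f1,g1,h1,z1) \<Rightarrow> case Y of (f2,g2,h2,z2) \<Rightarrow>
     integral\<^sup>L (Iv l) (\<lambda>y. EI y * wderiv l (wderiv l f1) y * wderiv l (wderiv l f2) y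
        + \<rho> y * g1 y * g2 y + GJ y * wderiv l h1 y * wderiv l h2 y + Iw y * z1 y * z2 y))"

definition ip2 :: "real \<Rightarrow> (real \<Rightarrow> real) \<Rightarrow> (real \<Rightarrow> real) \<Rightarrow> (real \<Rightarrow> real) \<Rightarrow> (real \<Rightarrow> real)
    \<Rightarrow> real \<Rightarrow> real \<Rightarrow> state \<Rightarrow> state \<Rightarrow> real" where
  "ip2 l EI \<rho> GJ Iw \<epsilon>1 \<epsilon>2 X Y = ip1 l EI \<rho> GJ Iw X Y +
     (case X of (f1,g1,h1,z1) \<Rightarrow> case Y of (f2,g2,h2,z2) \<Rightarrow>
       \<epsilon>1 * integral\<^sup>L (Iv l) (\<lambda>y. \<rho> y * (f1 y * g2 y + g1 y * f2 y))
     + \<epsilon>2 * integral\<^sup>L (Iv l) (\<lambda>y. Iw y * (h1 y * z2 y + z1 y * h2 y)))"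

definition Mom :: "real \<Rightarrow> (real \<Rightarrow> real) \<Rightarrow> (real \<Rightarrow> real) \<Rightarrow> state \<Rightarrow> (real \<Rightarrow> real)" where
  "Mom l EI \<eta>w X = (case X of (f,g,h,z) \<Rightarrow>
     (\<lambda>y. EI y * wderiv l (wderiv l f) y + \<eta>w y * EI y * wderiv l (wderiv l g) y))"

definition Tor :: "real \<Rightarrow> (real \<Rightarrow> real) \<Rightarrow> (real \<Rightarrow> real) \<Rightarrow> state \<Rightarrow> (real \<Rightarrow> real)" where
  "Tor l GJ \<eta>p X = (case X of (f,g,h,z) \<Rightarrow>
     (\<lambda>y. GJ y * wderiv l h y + \<eta>p y * GJ y * wderiv l z y))"

definition DA1 :: "real \<Rightarrow> (real \<Rightarrow> real) \<Rightarrow> (real \<Rightarrow> real) \<Rightarrow> (real \<Rightarrow> real) \<Rightarrow> (real \<Rightarrow> real)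
    \<Rightarrow> real \<Rightarrow> real \<Rightarrow> real \<Rightarrow> real \<Rightarrow> state set" where
  "DA1 l EI GJ \<eta>w \<eta>p k1 k2 \<epsilon>1 \<epsilon>2 = {X \<in> Hspace l. case X of (f,g,h,z) \<Rightarrow>
      H2 l g \<and> H1 l z \<and> H2 l (Mom l EI \<eta>w X) \<and> H1 l (Tor l GJ \<eta>p X) \<and>
      rep l g 0 = 0 \<and> rep l (wderiv l g) 0 = 0 \<and> rep l z 0 = 0 \<and>
      rep l (Mom l EI \<eta>w X) l = 0 \<and>
      rep l (wderiv l (Mom l EI \<eta>w X)) l = k1 * (rep l g l + \<epsilon>1 * rep l f l) \<and>
      rep l (Tor l GJ \<eta>p X) l = - k2 * (rep l z l + \<epsilon>2 * rep l h l)}"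

definition A1 :: "real \<Rightarrow> (real \<Rightarrow> real) \<Rightarrow> (real \<Rightarrow> real) \<Rightarrow> (real \<Rightarrow> real) \<Rightarrow> (real \<Rightarrow> real)
    \<Rightarrow> (real \<Rightarrow> real) \<Rightarrow> (real \<Rightarrow> real) \<Rightarrow> state \<Rightarrow> state" where
  "A1 l \<rho> Iw EI GJ \<eta>w \<eta>p X = (case X of (f,g,h,z) \<Rightarrow>
     (g, (\<lambda>y. - (1 / \<rho> y) * wderiv l (wderiv l (Mom l EI \<eta>w X)) y),
      z, (\<lambda>y. (1 / Iw y) * wderiv l (Tor l GJ \<eta>p X) y)))"

definition Km :: "real \<Rightarrow> (real \<Rightarrow> real) \<Rightarrow> (real \<Rightarrow> real) \<Rightarrow> (real \<Rightarrow> real) \<Rightarrow> (real \<Rightarrow> real) \<Rightarrow> real" where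
  "Km l \<rho> Iw EI GJ = Max {sqrt (ess_sup l \<rho>),
      16 * l^4 * sqrt (ess_sup l \<rho>) / (pi^4 * ess_inf l EI),
      sqrt (ess_sup l Iw),
      4 * l^2 * sqrt (ess_sup l Iw) / (pi^2 * ess_inf l GJ)}"

definition eps1_star :: "real \<Rightarrow> (real \<Rightarrow> real) \<Rightarrow> (real \<Rightarrow> real) \<Rightarrow> (real \<Rightarrow> real) \<Rightarrow> real" where
  "eps1_star l \<rho> EI \<eta>w = 4 * pi^4 * ess_inf l (\<lambda>y. \<eta>w y * EI y) /
      (64 * l^4 * ess_sup l \<rho> + pi^4 * ess_sup l \<eta>w * ess_inf l (\<lambda>y. \<eta>w y * EI y))"

definition eps2_star :: "real \<Rightarrow> (real \<Rightarrow> real) \<Rightarrow> (real \<Rightarrow> real) \<Rightarrow> (real \<Rightarrow> real) \<Rightarrow> real" where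
  "eps2_star l Iw GJ \<eta>p = 4 * pi^2 * ess_inf l (\<lambda>y. \<eta>p y * GJ y) /
      (16 * l^2 * ess_sup l Iw + pi^2 * ess_sup l \<eta>p * ess_inf l (\<lambda>y. \<eta>p y * GJ y))"

end

theory Submission
  imports Defs
begin

lemma Iv_space[simp]: "space (Iv l) = {0<..<l}" by (simp add: Iv_def)
lemma Iv_sets_eq: "sets (Iv l) = sets (lebesgue_on {0<..<l})" by (simp add: Iv_def)
lemma fin_Iv: "finite_measure (Iv l)" unfolding Iv_def
  by (rule finite_measure_lebesgue_on) simp
lemma id_meas: "(\<lambda>x::real. x) \<in> borel_measurable (Iv l)"
  unfolding Iv_def by (simp add: measurable_completion measurable_restrict_space1)

lemma pair_Iv: "pair_sigma_finite (Iv l) (Iv l)"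
  using fin_Iv by (auto simp: pair_sigma_finite_def finite_measure_def)

lemma meas_le_pair: "(\<lambda>p::real\<times>real. of_bool (snd p \<le> fst p) :: real) \<in> borel_measurable (Iv l \<Otimes>\<^sub>M Iv l)"
  using id_meas[of l] by measurable

lemma meas_Iv_lebesgue:
  fixes G :: "real \<Rightarrow> real"
  assumes "G \<in> borel_measurable (Iv l)"
  shows "(\<lambda>t. indicator {0<..<l} t * G t) \<in> borel_measurable lebesgue"
  using assms borel_measurable_restrict_space_iff[of "{0<..<l}" lebesgue G] unfolding Iv_def
  by auto

lemma int_Icc_Iv:
  fixes G :: "real \<Rightarrow> real"
  assumes G: "G \<in> borel_measurable (Iv l)" and x: "0 \<le> x" "x \<le> l"
  shows "integral\<^sup>L (lebesgue_on {0..x}) G = integral\<^sup>L (Iv l) (\<lambda>t. indicator {..x} t * G t)"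
proof -
  have "integral\<^sup>L (lebesgue_on {0..x}) G = integral\<^sup>L lebesgue (\<lambda>t. indicator {0..x} t *\<^sub>R G t)"
    by (rule integral_restrict_space) auto
  also have "\<dots> = integral\<^sup>L lebesgue (\<lambda>t. indicator {0<..<l} t *\<^sub>R (indicator {..x} t * G t))"
  proof (rule integral_cong_AE)
    have m: "(\<lambda>t. indicator {0<..<l} t * G t) \<in> borel_measurable lebesgue"
      by (rule meas_Iv_lebesgue[OF G])
    show m2: "(\<lambda>t. indicator {0<..<l} t *\<^sub>R (indicator {..x} t * G t)) \<in> borel_measurable lebesgue"
    proof -
      have "(\<lambda>t. indicator {..x} t * (indicator {0<..<l} t * G t)) \<in> borel_measurable lebesgue"
        by (intro borel_measurable_times borel_measurable_indicator m) auto
      then show ?thesis by (simp add: mult_ac)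
    qed
    have ae: "AE t in lebesgue. t \<notin> {0, l}"
      by (rule AE_not_in) simp
    show ae2: "AE t in lebesgue. indicator {0..x} t *\<^sub>R G t = indicator {0<..<l} t *\<^sub>R (indicator {..x} t * G t)"
      using ae by eventually_elim (use x in \<open>auto simp: indicator_def\<close>)
    show "(\<lambda>t. indicator {0..x} t *\<^sub>R G t) \<in> borel_measurable lebesgue"
      by (rule borel_measurable_AE[OF m2]) (use ae2 in \<open>auto elim: AE_mp\<close>)
  qed
  also have "\<dots> = integral\<^sup>L (Iv l) (\<lambda>t. indicator {..x} t * G t)"
    unfolding Iv_def by (rule integral_restrict_space[symmetric]) auto
  finally show ?thesis .
qed

lemma sf_Iv: "sigma_finite_measure (Iv l)"
  using fin_Iv finite_measure_def by auto

lemma ind_le: "indicator {..x} t = (of_bool (t \<le> x) :: real)"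
  by (simp add: indicator_def)
lemma ind_ge: "indicator {t..} x = (of_bool (t \<le> x) :: real)"
  by (simp add: indicator_def)

lemma meas_partial:
  fixes a :: "real \<Rightarrow> real"
  assumes a[measurable]: "a \<in> borel_measurable (Iv l)"
  shows "(\<lambda>x. \<integral>t. indicator {..x} t * a t \<partial>Iv l) \<in> borel_measurable (Iv l)"
proof -
  interpret sigma_finite_measure "Iv l" by (rule sf_Iv)
  note id_meas[of l, measurable]
  show ?thesis unfolding ind_le
    by (rule borel_measurable_lebesgue_integral) measurable
qed

lemma meas_partial2:
  fixes a :: "real \<Rightarrow> real"
  assumes a[measurable]: "a \<in> borel_measurable (Iv l)"
  shows "(\<lambda>x. \<integral>t. indicator {x..} t * a t \<partial>Iv l) \<in> borel_measurable (Iv l)"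
proof -
  interpret sigma_finite_measure "Iv l" by (rule sf_Iv)
  note id_meas[of l, measurable]
  show ?thesis unfolding ind_ge
    by (rule borel_measurable_lebesgue_integral) measurable
qed

lemma int_ind_le:
  fixes a :: "real \<Rightarrow> real"
  assumes "integrable (Iv l) a"
  shows "integrable (Iv l) (\<lambda>t. indicator {..x} t * a t)"
proof (rule Bochner_Integration.integrable_bound[OF integrable_abs[OF assms]])
  note id_meas[of l, measurable] borel_measurable_integrable[OF assms, measurable]
  show "(\<lambda>t. indicator {..x} t * a t) \<in> borel_measurable (Iv l)" unfolding ind_le by measurable
qed (auto simp: indicator_def)

lemma int_ind_ge:
  fixes a :: "real \<Rightarrow> real"
  assumes "integrable (Iv l) a"
  shows "integrable (Iv l) (\<lambda>t. indicator {x..} t * a t)"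
proof (rule Bochner_Integration.integrable_bound[OF integrable_abs[OF assms]])
  note id_meas[of l, measurable] borel_measurable_integrable[OF assms, measurable]
  show "(\<lambda>t. indicator {x..} t * a t) \<in> borel_measurable (Iv l)" unfolding ind_ge by measurable
qed (auto simp: indicator_def)

lemma bound_partial:
  fixes a :: "real \<Rightarrow> real"
  assumes "integrable (Iv l) a"
  shows "\<bar>\<integral>t. indicator {..x} t * a t \<partial>Iv l\<bar> \<le> (\<integral>t. \<bar>a t\<bar> \<partial>Iv l)"
proof -
  have "\<bar>\<integral>t. indicator {..x} t * a t \<partial>Iv l\<bar> \<le> (\<integral>t. \<bar>indicator {..x} t * a t\<bar> \<partial>Iv l)"
    by (rule integral_abs_bound)
  also have "\<dots> \<le> (\<integral>t. \<bar>a t\<bar> \<partial>Iv l)"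
    by (rule integral_mono) (use integrable_abs[OF int_ind_le[OF assms, of x]] integrable_abs[OF assms] in \<open>auto simp: indicator_def\<close>)
  finally show ?thesis .
qed

lemma fub:
  fixes a b :: "real \<Rightarrow> real"
  assumes a: "integrable (Iv l) a" and b: "integrable (Iv l) b"
  shows "(\<integral>x. b x * (\<integral>t. indicator {..x} t * a t \<partial>Iv l) \<partial>Iv l)
       = (\<integral>t. a t * (\<integral>x. indicator {t..} x * b x \<partial>Iv l) \<partial>Iv l)"
proof -
  interpret pair_sigma_finite "Iv l" "Iv l" by (rule pair_Iv)
  note id_meas[of l, measurable] borel_measurable_integrable[OF a, measurable]
    borel_measurable_integrable[OF b, measurable]
  define f where "f = (\<lambda>x t. b x * (of_bool (t \<le> x) * a t))"
  have fm[measurable]: "case_prod f \<in> borel_measurable (Iv l \<Otimes>\<^sub>M Iv l)"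
    unfolding f_def by measurable
  have gi: "integrable (Iv l \<Otimes>\<^sub>M Iv l) (\<lambda>(x,t). b x * a t)"
  proof (rule Fubini_integrable)
    show "(\<lambda>(x,t). b x * a t) \<in> borel_measurable (Iv l \<Otimes>\<^sub>M Iv l)" by measurable
    have "(\<lambda>x. \<integral>y. norm (case (x, y) of (x, t) \<Rightarrow> b x * a t) \<partial>Iv l) = (\<lambda>x. \<bar>b x\<bar> * (\<integral>y. \<bar>a y\<bar> \<partial>Iv l))"
      by (simp add: abs_mult)
    then show "integrable (Iv l) (\<lambda>x. \<integral>y. norm (case (x, y) of (x, t) \<Rightarrow> b x * a t) \<partial>Iv l)"
      using b by simp
    show "AE x in Iv l. integrable (Iv l) (\<lambda>y. case (x, y) of (x, t) \<Rightarrow> b x * a t)"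
      using a by simp
  qed
  have fi: "integrable (Iv l \<Otimes>\<^sub>M Iv l) (case_prod f)"
    by (rule Bochner_Integration.integrable_bound[OF gi fm]) (auto simp: f_def abs_mult)
  have "(\<integral>t. (\<integral>x. f x t \<partial>Iv l) \<partial>Iv l) = (\<integral>x. (\<integral>t. f x t \<partial>Iv l) \<partial>Iv l)"
    by (rule Fubini_integral[OF fi])
  moreover have "\<And>x. (\<integral>t. f x t \<partial>Iv l) = b x * (\<integral>t. indicator {..x} t * a t \<partial>Iv l)"
    by (simp add: f_def ind_le)
  moreover have "\<And>t. (\<integral>x. f x t \<partial>Iv l) = a t * (\<integral>x. indicator {t..} x * b x \<partial>Iv l)"
  proof -
    fix t
    have "(\<integral>x. f x t \<partial>Iv l) = (\<integral>x. a t * (indicator {t..} x * b x) \<partial>Iv l)"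
      unfolding f_def ind_ge by (simp add: mult_ac)
    then show "(\<integral>x. f x t \<partial>Iv l) = a t * (\<integral>x. indicator {t..} x * b x \<partial>Iv l)" by simp
  qed
  ultimately show ?thesis by simp
qed

definition acd :: "real \<Rightarrow> (real \<Rightarrow> real) \<Rightarrow> (real \<Rightarrow> real) \<Rightarrow> bool" where
  "acd l F G \<longleftrightarrow> integrable (Iv l) G \<and>
     (\<forall>x\<in>{0..l}. F x = F 0 + (\<integral>t. indicator {..x} t * G t \<partial>Iv l))"

lemma acdD1: "acd l F G \<Longrightarrow> integrable (Iv l) G"
  unfolding acd_def by (erule conjunct1)
lemma acdD2: "acd l F G \<Longrightarrow> x \<in> {0..l} \<Longrightarrow> F x = F 0 + (\<integral>t. indicator {..x} t * G t \<partial>Iv l)"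
  unfolding acd_def by (erule conjE) (erule bspec)

lemma L2_int: "L2 l f \<Longrightarrow> integrable (Iv l) f"
  unfolding L2_def
  using finite_measure.square_integrable_imp_integrable[OF fin_Iv] by blast

lemma hwd_acd: "has_weak_deriv l F G \<Longrightarrow> acd l F G"
  unfolding has_weak_deriv_def acd_def
  using int_Icc_Iv L2_int L2_def by fastforce

lemma acd_meas:
  assumes "acd l F G" shows "F \<in> borel_measurable (Iv l)"
proof -
  have i: "integrable (Iv l) G" and e: "\<And>x. x\<in>{0..l} \<Longrightarrow> F x = F 0 + (\<integral>t. indicator {..x} t * G t \<partial>Iv l)"
     apply (rule acdD1[OF assms(1)]) by (rule acdD2[OF assms(1)])
  have "(\<lambda>x. F 0 + (\<integral>t. indicator {..x} t * G t \<partial>Iv l)) \<in> borel_measurable (Iv l)"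
    using meas_partial[OF borel_measurable_integrable[OF i]] by simp
  moreover have "\<And>x. x \<in> space (Iv l) \<Longrightarrow> F 0 + (\<integral>t. indicator {..x} t * G t \<partial>Iv l) = F x"
  proof -
    fix x assume "x \<in> space (Iv l)"
    then have "x \<in> {0..l}" by auto
    from e[OF this] show "F 0 + (\<integral>t. indicator {..x} t * G t \<partial>Iv l) = F x" by simp
  qed
  ultimately show ?thesis
    using measurable_cong[of "Iv l" "\<lambda>x. F 0 + (\<integral>t. indicator {..x} t * G t \<partial>Iv l)" F] by simp
qed

lemma acd_bound:
  assumes "acd l F G" "x \<in> {0..l}" shows "\<bar>F x\<bar> \<le> \<bar>F 0\<bar> + (\<integral>t. \<bar>G t\<bar> \<partial>Iv l)"
proof -
  have i: "integrable (Iv l) G" and e: "F x = F 0 + (\<integral>t. indicator {..x} t * G t \<partial>Iv l)"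
     apply (rule acdD1[OF assms(1)]) by (rule acdD2[OF assms])
  show ?thesis using e bound_partial[OF i, of x] by linarith
qed

lemma acd_end:
  assumes "acd l F G" "0 \<le> l" shows "F l = F 0 + (\<integral>t. G t \<partial>Iv l)"
proof -
  have i: "integrable (Iv l) G" and e: "F l = F 0 + (\<integral>t. indicator {..l} t * G t \<partial>Iv l)"
     apply (rule acdD1[OF assms(1)]) by (rule acdD2[OF assms(1)]) (use assms in auto)
  have "(\<integral>t. indicator {..l} t * G t \<partial>Iv l) = (\<integral>t. G t \<partial>Iv l)"
    by (rule Bochner_Integration.integral_cong) (auto simp: indicator_def)
  then show ?thesis using e by simp
qed

lemma int_bdd_mult:
  fixes a B :: "real \<Rightarrow> real"
  assumes a: "integrable (Iv l) a" and B: "B \<in> borel_measurable (Iv l)"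
    and bd: "\<And>x. x \<in> {0<..<l} \<Longrightarrow> \<bar>B x\<bar> \<le> K"
  shows "integrable (Iv l) (\<lambda>x. a x * B x)"
proof (rule Bochner_Integration.integrable_bound[OF integrable_mult_right[OF integrable_abs[OF a], of K]])
  show "(\<lambda>x. a x * B x) \<in> borel_measurable (Iv l)"
    using borel_measurable_integrable[OF a] B by measurable
  show "AE x in Iv l. norm (a x * B x) \<le> norm (K * \<bar>a x\<bar>)"
  proof (rule AE_I2)
    fix x assume "x \<in> space (Iv l)"
    then have "\<bar>B x\<bar> \<le> K" using bd by auto
    then show "norm (a x * B x) \<le> norm (K * \<bar>a x\<bar>)"
      using mult_right_mono[of "\<bar>B x\<bar>" K "\<bar>a x\<bar>"] by (simp add: abs_mult mult.commute)
  qed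
qed

lemma acd_int_mult:
  assumes "acd l B b" "integrable (Iv l) a"
  shows "integrable (Iv l) (\<lambda>x. a x * B x)"
  by (rule int_bdd_mult[OF assms(2) acd_meas[OF assms(1)], where K="\<bar>B 0\<bar> + (\<integral>t. \<bar>b t\<bar> \<partial>Iv l)"])
     (use acd_bound[OF assms(1)] in auto)

lemma AE_Iv_ne: "AE t in Iv l. t \<noteq> x"
proof -
  have "AE t in lebesgue. t \<notin> {x}" by (rule AE_not_in) simp
  then have "AE t in lebesgue. t \<in> {0<..<l} \<longrightarrow> t \<noteq> x" by eventually_elim auto
  then show ?thesis unfolding Iv_def by (subst AE_restrict_space_iff) auto
qed

lemma partial_sum:
  fixes b :: "real \<Rightarrow> real"
  assumes b: "integrable (Iv l) b"
  shows "(\<integral>t. indicator {..x} t * b t \<partial>Iv l) + (\<integral>t. indicator {x..} t * b t \<partial>Iv l) = (\<integral>t. b t \<partial>Iv l)"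
proof -
  have "(\<integral>t. indicator {..x} t * b t \<partial>Iv l) + (\<integral>t. indicator {x..} t * b t \<partial>Iv l)
     = (\<integral>t. indicator {..x} t * b t + indicator {x..} t * b t \<partial>Iv l)"
    by (rule Bochner_Integration.integral_add[symmetric]) (intro int_ind_le int_ind_ge b)+
  also have "\<dots> = (\<integral>t. b t \<partial>Iv l)"
  proof (rule integral_cong_AE)
    show "(\<lambda>t. indicator {..x} t * b t + indicator {x..} t * b t) \<in> borel_measurable (Iv l)"
      using int_ind_le[OF b] int_ind_ge[OF b] by auto
    show "b \<in> borel_measurable (Iv l)" using b by auto
    show "AE t in Iv l. indicator {..x} t * b t + indicator {x..} t * b t = b t"
      using AE_Iv_ne[where l=l and x=x] by eventually_elim (auto simp: indicator_def)
  qed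
  finally show ?thesis .
qed

lemma ibp:
  assumes A: "acd l A a" and B: "acd l B b" and l: "0 < l"
  shows "integrable (Iv l) (\<lambda>x. a x * B x)" "integrable (Iv l) (\<lambda>x. A x * b x)"
    "(\<integral>x. a x * B x \<partial>Iv l) + (\<integral>x. A x * b x \<partial>Iv l) = A l * B l - A 0 * B 0"
proof -
  have a: "integrable (Iv l) a" and eA: "\<And>x. x\<in>{0..l} \<Longrightarrow> A x = A 0 + (\<integral>t. indicator {..x} t * a t \<partial>Iv l)"
     apply (rule acdD1[OF A]) by (rule acdD2[OF A])
  have b: "integrable (Iv l) b" and eB: "\<And>x. x\<in>{0..l} \<Longrightarrow> B x = B 0 + (\<integral>t. indicator {..x} t * b t \<partial>Iv l)"
     apply (rule acdD1[OF B]) by (rule acdD2[OF B])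
  show i1: "integrable (Iv l) (\<lambda>x. a x * B x)" by (rule acd_int_mult[OF B a])
  have i2': "integrable (Iv l) (\<lambda>x. b x * A x)" by (rule acd_int_mult[OF A b])
  then show i2: "integrable (Iv l) (\<lambda>x. A x * b x)" by (simp add: mult.commute)
  define Pa where "Pa x = (\<integral>t. indicator {..x} t * a t \<partial>Iv l)" for x
  define Pb where "Pb x = (\<integral>t. indicator {..x} t * b t \<partial>Iv l)" for x
  define Qb where "Qb x = (\<integral>t. indicator {x..} t * b t \<partial>Iv l)" for x
  have iaPb: "integrable (Iv l) (\<lambda>x. a x * Pb x)"
    unfolding Pb_def
    by (rule int_bdd_mult[OF a meas_partial[OF borel_measurable_integrable[OF b]]])
       (rule bound_partial[OF b])
  have ibPa: "integrable (Iv l) (\<lambda>x. b x * Pa x)"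
    unfolding Pa_def
    by (rule int_bdd_mult[OF b meas_partial[OF borel_measurable_integrable[OF a]]])
       (rule bound_partial[OF a])
  have iaQb: "integrable (Iv l) (\<lambda>x. a x * Qb x)"
  proof -
    have bd: "\<bar>Qb x\<bar> \<le> (\<integral>t. \<bar>b t\<bar> \<partial>Iv l)" for x
    proof -
      have "\<bar>Qb x\<bar> \<le> (\<integral>t. \<bar>indicator {x..} t * b t\<bar> \<partial>Iv l)" unfolding Qb_def by (rule integral_abs_bound)
      also have "\<dots> \<le> (\<integral>t. \<bar>b t\<bar> \<partial>Iv l)"
        by (rule integral_mono) (use integrable_abs[OF int_ind_ge[OF b, of x]] integrable_abs[OF b] in \<open>auto simp: indicator_def\<close>)
      finally show ?thesis .
    qed
    show ?thesis unfolding Qb_def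
      by (rule int_bdd_mult[OF a meas_partial2[OF borel_measurable_integrable[OF b]]])
         (use bd[unfolded Qb_def] in auto)
  qed
  have "(\<integral>x. a x * B x \<partial>Iv l) = (\<integral>x. B 0 * a x + a x * Pb x \<partial>Iv l)"
    proof (rule Bochner_Integration.integral_cong)
    fix x assume "x \<in> space (Iv l)"
    then have "B x = B 0 + Pb x" using eB[of x] by (auto simp: Pb_def)
    then show "a x * B x = B 0 * a x + a x * Pb x" by (simp add: algebra_simps)
  qed simp
  also have "\<dots> = B 0 * (\<integral>x. a x \<partial>Iv l) + (\<integral>x. a x * Pb x \<partial>Iv l)"
    using a iaPb by simp
  finally have e1: "(\<integral>x. a x * B x \<partial>Iv l) = B 0 * (\<integral>x. a x \<partial>Iv l) + (\<integral>x. a x * Pb x \<partial>Iv l)" .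
  have "(\<integral>x. A x * b x \<partial>Iv l) = (\<integral>x. A 0 * b x + b x * Pa x \<partial>Iv l)"
    proof (rule Bochner_Integration.integral_cong)
    fix x assume "x \<in> space (Iv l)"
    then have "A x = A 0 + Pa x" using eA[of x] by (auto simp: Pa_def)
    then show "A x * b x = A 0 * b x + b x * Pa x" by (simp add: algebra_simps)
  qed simp
  also have "\<dots> = A 0 * (\<integral>x. b x \<partial>Iv l) + (\<integral>x. b x * Pa x \<partial>Iv l)"
    using b ibPa by simp
  finally have e2: "(\<integral>x. A x * b x \<partial>Iv l) = A 0 * (\<integral>x. b x \<partial>Iv l) + (\<integral>x. b x * Pa x \<partial>Iv l)" .
  have e3: "(\<integral>x. b x * Pa x \<partial>Iv l) = (\<integral>x. a x * Qb x \<partial>Iv l)"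
    unfolding Pa_def Qb_def by (rule fub[OF a b])
  have "(\<integral>x. a x * Pb x \<partial>Iv l) + (\<integral>x. a x * Qb x \<partial>Iv l) = (\<integral>x. a x * Pb x + a x * Qb x \<partial>Iv l)"
    using iaPb iaQb by simp
  also have "\<dots> = (\<integral>x. a x * (\<integral>t. b t \<partial>Iv l) \<partial>Iv l)"
    by (rule Bochner_Integration.integral_cong) (auto simp: Pb_def Qb_def partial_sum[OF b] distrib_left[symmetric])
  also have "\<dots> = (\<integral>x. a x \<partial>Iv l) * (\<integral>t. b t \<partial>Iv l)" by simp
  finally have e4: "(\<integral>x. a x * Pb x \<partial>Iv l) + (\<integral>x. a x * Qb x \<partial>Iv l) = (\<integral>x. a x \<partial>Iv l) * (\<integral>t. b t \<partial>Iv l)" .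
  have Al: "A l = A 0 + (\<integral>t. a t \<partial>Iv l)" by (rule acd_end[OF A]) (use l in auto)
  have Bl: "B l = B 0 + (\<integral>t. b t \<partial>Iv l)" by (rule acd_end[OF B]) (use l in auto)
  show "(\<integral>x. a x * B x \<partial>Iv l) + (\<integral>x. A x * b x \<partial>Iv l) = A l * B l - A 0 * B 0"
    unfolding e1 e2 e3 Al Bl using e4 by (simp add: algebra_simps)
qed

lemma cont_meas_Iv:
  fixes f :: "real \<Rightarrow> real"
  assumes "continuous_on UNIV f" shows "f \<in> borel_measurable (Iv l)"
proof -
  have "f \<in> borel_measurable borel" using assms by (rule borel_measurable_continuous_onI)
  from measurable_compose[OF id_meas this] show ?thesis by simp
qed

lemma ftc_Iv:
  fixes f F :: "real \<Rightarrow> real"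
  assumes x: "0 \<le> x" "x \<le> l" and F: "\<And>y. (F has_real_derivative f y) (at y)"
    and f: "continuous_on UNIV f"
  shows "(\<integral>t. indicator {..x} t * f t \<partial>Iv l) = F x - F 0"
proof -
  have fm: "f \<in> borel_measurable (Iv l)" by (rule cont_meas_Iv[OF f])
  have "(\<integral>t. indicator {..x} t * f t \<partial>Iv l) = integral\<^sup>L (lebesgue_on {0..x}) f"
    by (rule int_Icc_Iv[OF fm x, symmetric])
  also have "\<dots> = integral\<^sup>L lebesgue (\<lambda>t. indicator {0..x} t *\<^sub>R f t)"
    by (rule integral_restrict_space) auto
  also have "\<dots> = integral\<^sup>L lborel (\<lambda>t. indicator {0..x} t *\<^sub>R f t)"
  proof (rule integral_completion)
    have "f \<in> borel_measurable borel" using f by (rule borel_measurable_continuous_onI)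
    then show "(\<lambda>t. indicator {0..x} t *\<^sub>R f t) \<in> borel_measurable lborel" by simp
  qed
  also have "\<dots> = F x - F 0"
  proof (rule integral_FTC_atLeastAtMost)
    show "0 \<le> x" by fact
    fix y show "(F has_vector_derivative f y) (at y within {0..x})"
      using F[of y] by (simp add: has_real_derivative_iff_has_vector_derivative has_vector_derivative_at_within)
  next
    show "continuous_on {0..x} f" using f by (rule continuous_on_subset) auto
  qed
  finally show ?thesis .
qed

lemma cs_w:
  fixes f p e :: "real \<Rightarrow> real"
  assumes p: "\<And>t. t \<in> space M \<Longrightarrow> p t > 0" and e: "\<And>t. t \<in> space M \<Longrightarrow> e t \<ge> 0"
    and iA: "integrable M (\<lambda>t. e t * (f t)\<^sup>2 / p t)" and iB: "integrable M (\<lambda>t. e t * p t)"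
    and iC: "integrable M (\<lambda>t. e t * f t)"
  shows "(\<integral>t. e t * f t \<partial>M)\<^sup>2 \<le> (\<integral>t. e t * (f t)\<^sup>2 / p t \<partial>M) * (\<integral>t. e t * p t \<partial>M)"
proof -
  define A where "A = (\<integral>t. e t * (f t)\<^sup>2 / p t \<partial>M)"
  define B where "B = (\<integral>t. e t * p t \<partial>M)"
  define C where "C = (\<integral>t. e t * f t \<partial>M)"
  have key: "0 \<le> A - 2 * c * C + c\<^sup>2 * B" for c
  proof -
    have "(\<integral>t. e t * (f t)\<^sup>2 / p t - 2 * c * (e t * f t) + c\<^sup>2 * (e t * p t) \<partial>M) = A - 2 * c * C + c\<^sup>2 * B"
      unfolding A_def B_def C_def using iA iB iC by simp
    moreover have "0 \<le> (\<integral>t. e t * (f t)\<^sup>2 / p t - 2 * c * (e t * f t) + c\<^sup>2 * (e t * p t) \<partial>M)"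
    proof (rule integral_nonneg_AE, rule AE_I2)
      fix t assume t: "t \<in> space M"
      have "e t * (f t)\<^sup>2 / p t - 2 * c * (e t * f t) + c\<^sup>2 * (e t * p t) = e t * (f t - c * p t)\<^sup>2 / p t"
        using p[OF t] by (simp add: field_simps power2_eq_square)
      also have "\<dots> \<ge> 0" using p[OF t] e[OF t] by simp
      finally show "0 \<le> e t * (f t)\<^sup>2 / p t - 2 * c * (e t * f t) + c\<^sup>2 * (e t * p t)" .
    qed
    ultimately show ?thesis by simp
  qed
  have B0: "B \<ge> 0" unfolding B_def
    by (rule integral_nonneg_AE, rule AE_I2) (use p e in \<open>simp add: less_imp_le\<close>)
  show ?thesis
  proof (cases "B = 0")
    case True
    have "C = 0"
    proof (rule ccontr)
      assume "C \<noteq> 0"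
      have "0 \<le> A - 2 * ((A + 1) / (2 * C)) * C" using key[of "(A + 1) / (2 * C)"] True by simp
      also have "\<dots> = -1" using \<open>C \<noteq> 0\<close> by (simp add: field_simps)
      finally show False by simp
    qed
    then show ?thesis using True unfolding A_def B_def C_def by simp
  next
    case False
    then have Bp: "B > 0" using B0 by simp
    have "0 \<le> A - 2 * (C / B) * C + (C / B)\<^sup>2 * B" by (rule key)
    also have "\<dots> = (A * B - C\<^sup>2) / B" using Bp by (simp add: field_simps power2_eq_square)
    finally have "0 \<le> A * B - C\<^sup>2" using Bp by (simp add: divide_nonneg_pos zero_le_divide_iff)
    then show ?thesis unfolding A_def B_def C_def by simp
  qed
qed

lemma int_bdd:
  fixes B :: "real \<Rightarrow> real"
  assumes B: "B \<in> borel_measurable (Iv l)" and bd: "\<And>x. x \<in> {0<..<l} \<Longrightarrow> \<bar>B x\<bar> \<le> K"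
  shows "integrable (Iv l) B"
proof -
  have "integrable (Iv l) (\<lambda>x. 1 * B x)"
    by (rule int_bdd_mult[OF finite_measure.integrable_const[OF fin_Iv] B bd])
  then show ?thesis by simp
qed

lemma wirt_k:
  fixes u v :: "real \<Rightarrow> real"
  assumes u: "acd l u v" and l: "0 < l" and u0: "u 0 = 0"
    and v2: "integrable (Iv l) (\<lambda>t. (v t)\<^sup>2)" and k: "0 < k" "k * l < pi / 2"
  shows "(\<integral>t. (u t)\<^sup>2 \<partial>Iv l) \<le> (\<integral>t. (v t)\<^sup>2 \<partial>Iv l) / k\<^sup>2"
proof -
  have vi: "integrable (Iv l) v" by (rule acdD1[OF u])
  note vm = borel_measurable_integrable[OF vi]
  have ux: "u x = (\<integral>t. indicator {..x} t * v t \<partial>Iv l)" if "x \<in> {0..l}" for x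
    using acdD2[OF u that] u0 by simp
  define p where "p t = cos (k * t)" for t
  define c0 where "c0 = cos (k * l)"
  have kl0: "0 < k * l" using k l by simp
  have c0: "c0 > 0" unfolding c0_def by (rule cos_gt_zero_pi) (use k kl0 pi_gt_zero in linarith)+
  have pge: "p t \<ge> c0" if "t \<in> {0<..<l}" for t
    unfolding p_def c0_def
  proof (rule cos_monotone_0_pi_le)
    show "0 \<le> k * t" using that k by simp
    show "k * t \<le> k * l" using that k by simp
    show "k * l \<le> pi" using k(2) pi_gt_zero by linarith
  qed
  have ppos: "p t > 0" if "t \<in> {0<..<l}" for t using pge[OF that] c0 by simp
  have p1: "\<bar>p t\<bar> \<le> 1" for t unfolding p_def by simp
  have contp: "continuous_on UNIV p" unfolding p_def by (intro continuous_intros)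
  have pm: "p \<in> borel_measurable (Iv l)" by (rule cont_meas_Iv[OF contp])
  have pint: "integrable (Iv l) p" by (rule int_bdd[OF pm p1])
  define s where "s t = sin (k * t)" for t
  have conts: "continuous_on UNIV s" unfolding s_def by (intro continuous_intros)
  have sm: "s \<in> borel_measurable (Iv l)" by (rule cont_meas_Iv[OF conts])
  have sint: "integrable (Iv l) s" by (rule int_bdd[OF sm, of 1]) (simp add: s_def)
  define a where "a t = (v t)\<^sup>2 / p t" for t
  have ip: "(\<lambda>t. 1 / p t) \<in> borel_measurable (Iv l)" using pm by measurable
  have aint: "integrable (Iv l) a"
  proof -
    have "integrable (Iv l) (\<lambda>t. (v t)\<^sup>2 * (1 / p t))"
    proof (rule int_bdd_mult[OF v2 ip])
      fix t assume t: "t \<in> {0<..<l}"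
      show "\<bar>1 / p t\<bar> \<le> 1 / c0" using pge[OF t] ppos[OF t] c0 by (simp add: frac_le)
    qed
    then show ?thesis unfolding a_def by simp
  qed
  have anon: "a t \<ge> 0" if "t \<in> {0<..<l}" for t unfolding a_def using ppos[OF that] by simp
  define W where "W x = (\<integral>t. indicator {..x} t * a t \<partial>Iv l)" for x
  have Pp: "(\<integral>t. indicator {..x} t * p t \<partial>Iv l) = s x / k" if "x \<in> {0..l}" for x
  proof -
    have "(\<integral>t. indicator {..x} t * p t \<partial>Iv l) = sin (k * x) / k - sin (k * 0) / k"
      by (rule ftc_Iv) (use that k in \<open>auto intro!: derivative_eq_intros simp: p_def contp[unfolded p_def]\<close>)
    then show ?thesis by (simp add: s_def)
  qed
  have ubd: "(u x)\<^sup>2 \<le> W x * (s x / k)" if x: "x \<in> {0<..<l}" for x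
  proof -
    have "(u x)\<^sup>2 = (\<integral>t. indicator {..x} t * v t \<partial>Iv l)\<^sup>2" using ux[of x] x by simp
    also have "\<dots> \<le> (\<integral>t. indicator {..x} t * (v t)\<^sup>2 / p t \<partial>Iv l) * (\<integral>t. indicator {..x} t * p t \<partial>Iv l)"
    proof (rule cs_w)
      show "\<And>t. t \<in> space (Iv l) \<Longrightarrow> 0 < p t" using ppos by simp
      show "\<And>t. t \<in> space (Iv l) \<Longrightarrow> 0 \<le> (indicator {..x} t :: real)" by (simp add: indicator_def)
      have "integrable (Iv l) (\<lambda>t. indicator {..x} t * a t)" by (rule int_ind_le[OF aint])
      then show "integrable (Iv l) (\<lambda>t. indicator {..x} t * (v t)\<^sup>2 / p t)" by (simp add: a_def)
      show "integrable (Iv l) (\<lambda>t. indicator {..x} t * p t)" by (rule int_ind_le[OF pint])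
      show "integrable (Iv l) (\<lambda>t. indicator {..x} t * v t)" by (rule int_ind_le[OF vi])
    qed
    also have "\<dots> = W x * (s x / k)" using Pp[of x] x by (simp add: W_def a_def)
    finally show ?thesis .
  qed
  have um: "u \<in> borel_measurable (Iv l)" by (rule acd_meas[OF u])
  have ubound: "\<bar>u x\<bar> \<le> \<bar>u 0\<bar> + (\<integral>t. \<bar>v t\<bar> \<partial>Iv l)" if "x \<in> {0<..<l}" for x
    by (rule acd_bound[OF u]) (use that in auto)
  have uint: "integrable (Iv l) u" by (rule int_bdd[OF um ubound])
  have u2int: "integrable (Iv l) (\<lambda>t. (u t)\<^sup>2)"
    using int_bdd_mult[OF uint um ubound] by (simp add: power2_eq_square)
  have Wm: "W \<in> borel_measurable (Iv l)" unfolding W_def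
    by (rule meas_partial[OF borel_measurable_integrable[OF aint]])
  have sWint: "integrable (Iv l) (\<lambda>x. s x * W x)"
    by (rule int_bdd_mult[OF sint Wm]) (unfold W_def, rule bound_partial[OF aint])
  have "(\<integral>t. (u t)\<^sup>2 \<partial>Iv l) \<le> (\<integral>x. (s x * W x) / k \<partial>Iv l)"
    by (rule integral_mono) (use u2int sWint ubd in \<open>auto simp: mult_ac\<close>)
  also have "\<dots> = (\<integral>x. s x * W x \<partial>Iv l) / k" by simp
  also have "(\<integral>x. s x * W x \<partial>Iv l) = (\<integral>t. a t * (\<integral>x. indicator {t..} x * s x \<partial>Iv l) \<partial>Iv l)"
    unfolding W_def by (rule fub[OF aint sint])
  also have "\<dots> \<le> (\<integral>t. (v t)\<^sup>2 / k \<partial>Iv l)"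
  proof (rule integral_mono)
    define S where "S t = (\<integral>x. indicator {t..} x * s x \<partial>Iv l)" for t
    have Sm: "S \<in> borel_measurable (Iv l)" unfolding S_def
      by (rule meas_partial2[OF sm])
    have Sb: "\<bar>S t\<bar> \<le> (\<integral>x. \<bar>s x\<bar> \<partial>Iv l)" for t
    proof -
      have "\<bar>S t\<bar> \<le> (\<integral>x. \<bar>indicator {t..} x * s x\<bar> \<partial>Iv l)" unfolding S_def by (rule integral_abs_bound)
      also have "\<dots> \<le> (\<integral>x. \<bar>s x\<bar> \<partial>Iv l)"
        by (rule integral_mono) (use integrable_abs[OF int_ind_ge[OF sint, of t]] integrable_abs[OF sint] in \<open>auto simp: indicator_def\<close>)
      finally show ?thesis .
    qed
    show "integrable (Iv l) (\<lambda>t. a t * (\<integral>x. indicator {t..} x * s x \<partial>Iv l))"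
      using int_bdd_mult[OF aint Sm Sb] by (simp add: S_def)
    show "integrable (Iv l) (\<lambda>t. (v t)\<^sup>2 / k)" using v2 by simp
    fix t assume "t \<in> space (Iv l)"
    then have t: "t \<in> {0<..<l}" by simp
    have Fs: "\<And>y. ((\<lambda>x. - cos (k * x) / k) has_real_derivative s y) (at y)"
      using k by (auto intro!: derivative_eq_intros simp: s_def)
    have "S t + (\<integral>x. indicator {..t} x * s x \<partial>Iv l) = (\<integral>x. s x \<partial>Iv l)"
      unfolding S_def using partial_sum[OF sint, of t] by simp
    moreover have "(\<integral>x. s x \<partial>Iv l) = (\<integral>x. indicator {..l} x * s x \<partial>Iv l)"
      by (rule Bochner_Integration.integral_cong) (auto simp: indicator_def)
    moreover have "(\<integral>x. indicator {..l} x * s x \<partial>Iv l) = - cos (k * l) / k - (- cos (k * 0) / k)"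
      by (rule ftc_Iv[OF _ _ Fs conts]) (use l in auto)
    moreover have "(\<integral>x. indicator {..t} x * s x \<partial>Iv l) = - cos (k * t) / k - (- cos (k * 0) / k)"
      by (rule ftc_Iv[OF _ _ Fs conts]) (use t in auto)
    ultimately have "S t = cos (k * t) / k - cos (k * l) / k" by (simp; linarith)
    then have "S t = (p t - c0) / k" by (simp add: p_def c0_def diff_divide_distrib)
    then have "S t \<le> p t / k" using c0 k by (simp add: divide_right_mono)
    then have "a t * S t \<le> a t * (p t / k)" using anon[OF t] by (rule mult_left_mono)
    also have "\<dots> = (v t)\<^sup>2 / k" unfolding a_def using ppos[OF t] by simp
    finally show "a t * (\<integral>x. indicator {t..} x * s x \<partial>Iv l) \<le> (v t)\<^sup>2 / k" by (simp add: S_def)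
  qed
  also have "(\<integral>t. (v t)\<^sup>2 / k \<partial>Iv l) = (\<integral>t. (v t)\<^sup>2 \<partial>Iv l) / k" by simp
  finally have "(\<integral>t. (u t)\<^sup>2 \<partial>Iv l) \<le> (\<integral>t. (v t)\<^sup>2 \<partial>Iv l) / k / k"
    using k by (simp add: divide_right_mono)
  then show ?thesis by (simp add: power2_eq_square)
qed

lemma wirt:
  fixes u v :: "real \<Rightarrow> real"
  assumes u: "acd l u v" and l: "0 < l" and u0: "u 0 = 0"
    and v2: "integrable (Iv l) (\<lambda>t. (v t)\<^sup>2)"
  shows "(\<integral>t. (u t)\<^sup>2 \<partial>Iv l) \<le> 4 * l\<^sup>2 / pi\<^sup>2 * (\<integral>t. (v t)\<^sup>2 \<partial>Iv l)"
proof (rule ccontr)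
  define I where "I = (\<integral>t. (u t)\<^sup>2 \<partial>Iv l)"
  define J where "J = (\<integral>t. (v t)\<^sup>2 \<partial>Iv l)"
  define k0 where "k0 = pi / (2 * l)"
  have k0: "k0 > 0" unfolding k0_def using l by simp
  have J0: "J \<ge> 0" unfolding J_def by (rule integral_nonneg_AE) simp
  have e: "4 * l\<^sup>2 / pi\<^sup>2 * J = J / k0\<^sup>2" unfolding k0_def using l by (simp add: field_simps power2_eq_square)
  assume "\<not> (\<integral>t. (u t)\<^sup>2 \<partial>Iv l) \<le> 4 * l\<^sup>2 / pi\<^sup>2 * (\<integral>t. (v t)\<^sup>2 \<partial>Iv l)"
  then have gt: "I > J / k0\<^sup>2" unfolding I_def J_def[symmetric] e by simp
  have Jk: "J / k0\<^sup>2 \<ge> 0" using J0 by simp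
  have I0: "I > 0" using gt Jk by linarith
  define r where "r = J / (k0\<^sup>2 * I)"
  have r0: "r \<ge> 0" unfolding r_def using J0 I0 by simp
  have r1: "r < 1" unfolding r_def using gt I0 k0 by (simp add: field_simps)
  define s where "s = (1 + r) / 2"
  have s0: "s > 0" "s < 1" unfolding s_def using r0 r1 by auto
  have sr: "s\<^sup>2 > r"
  proof -
    have "s\<^sup>2 - r = ((1 - r) / 2)\<^sup>2" unfolding s_def by (simp add: field_simps power2_eq_square)
    also have "\<dots> > 0" using r1 by simp
    finally show ?thesis by simp
  qed
  define k where "k = k0 * s"
  have k: "0 < k" "k * l < pi / 2"
    unfolding k_def using k0 s0 l by (auto simp: k0_def field_simps)
  have "I \<le> J / k\<^sup>2" unfolding I_def J_def by (rule wirt_k[OF u l u0 v2 k])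
  then have "I * k\<^sup>2 \<le> J" using k by (simp add: field_simps)
  also have "J = r * (k0\<^sup>2 * I)" unfolding r_def using I0 k0 by simp
  finally have "s\<^sup>2 * (k0\<^sup>2 * I) \<le> r * (k0\<^sup>2 * I)" unfolding k_def by (simp add: power_mult_distrib mult_ac)
  then have "s\<^sup>2 \<le> r" using I0 k0 by simp
  then show False using sr by simp
qed

lemma Iv_nonnull: "0 < l \<Longrightarrow> \<not> (AE x in Iv l. False)"
proof
  assume l: "0 < l" and "AE x in Iv l. False"
  moreover have "{x\<in>space (Iv l). \<not> False} = space (Iv l)" by blast
  ultimately have "emeasure (Iv l) (space (Iv l)) = 0" using AE_iff_measurable[OF sets.top[of "Iv l"], of "\<lambda>x. False"] by blast
  moreover have "emeasure (Iv l) (space (Iv l)) = ennreal l" unfolding Iv_def using l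
    by (simp add: emeasure_restrict_space)
  ultimately show False using l by simp
qed

lemma Linf_bdd: "Linf l f \<Longrightarrow> \<exists>C. AE x in Iv l. \<bar>f x\<bar> \<le> C"
  unfolding Linf_def by blast

lemma ess_sup_AE:
  assumes f: "Linf l f" and l: "0 < l"
  shows "AE x in Iv l. f x \<le> ess_sup l f"
proof -
  define S where "S = {c. AE x in Iv l. f x \<le> c}"
  obtain C where C: "AE x in Iv l. \<bar>f x\<bar> \<le> C" using Linf_bdd[OF f] by blast
  have CS: "C \<in> S" unfolding S_def mem_Collect_eq using C by eventually_elim auto
  have lb: "- C \<le> c" if "c \<in> S" for c
  proof (rule ccontr)
    assume "\<not> - C \<le> c"
    have "AE x in Iv l. False" using C that[unfolded S_def mem_Collect_eq] by eventually_elim (use \<open>\<not> - C \<le> c\<close> in auto)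
    then show False using Iv_nonnull[OF l] by simp
  qed
  have bdd: "bdd_below S" by (rule bdd_belowI, rule lb)
  have ex: "\<exists>c\<in>S. c < Inf S + 1 / Suc n" for n :: nat
  proof -
    have "Inf S < Inf S + 1 / Suc n" by simp
    then show ?thesis using cInf_less_iff[of S "Inf S + 1 / Suc n"] CS bdd by blast
  qed
  have "\<forall>n::nat. AE x in Iv l. f x \<le> Inf S + 1 / Suc n"
  proof
    fix n :: nat
    obtain c where c: "c \<in> S" "c < Inf S + 1 / Suc n" using ex[of n] by blast
    from c(1) have "AE x in Iv l. f x \<le> c" by (simp add: S_def)
    then show "AE x in Iv l. f x \<le> Inf S + 1 / Suc n" by eventually_elim (use c(2) in auto)
  qed
  then have "AE x in Iv l. \<forall>n::nat. f x \<le> Inf S + 1 / Suc n" by (simp add: AE_all_countable)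
  then show ?thesis
  proof eventually_elim
    fix x assume h: "\<forall>n::nat. f x \<le> Inf S + 1 / Suc n"
    show "f x \<le> ess_sup l f" unfolding ess_sup_def S_def[symmetric]
    proof (rule field_le_epsilon)
      fix e :: real assume e: "0 < e"
      obtain n :: nat where "1 / Suc n < e" using e by (metis nat_approx_posE)
      then show "f x \<le> Inf S + e" using h[rule_format, of n] by linarith
    qed
  qed
qed

lemma ess_inf_AE:
  assumes f: "Linf l f" and l: "0 < l"
  shows "AE x in Iv l. ess_inf l f \<le> f x"
proof -
  define S where "S = {c. AE x in Iv l. c \<le> f x}"
  obtain C where C: "AE x in Iv l. \<bar>f x\<bar> \<le> C" using Linf_bdd[OF f] by blast
  have CS: "- C \<in> S" unfolding S_def mem_Collect_eq using C by eventually_elim auto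
  have ub: "c \<le> C" if "c \<in> S" for c
  proof (rule ccontr)
    assume "\<not> c \<le> C"
    have "AE x in Iv l. False" using C that[unfolded S_def mem_Collect_eq] by eventually_elim (use \<open>\<not> c \<le> C\<close> in auto)
    then show False using Iv_nonnull[OF l] by simp
  qed
  have bdd: "bdd_above S" by (rule bdd_aboveI, rule ub)
  have ex: "\<exists>c\<in>S. Sup S - 1 / Suc n < c" for n :: nat
  proof -
    have "Sup S - 1 / Suc n < Sup S" by simp
    then show ?thesis using less_cSup_iff[of S "Sup S - 1 / Suc n"] CS bdd by blast
  qed
  have "\<forall>n::nat. AE x in Iv l. Sup S - 1 / Suc n \<le> f x"
  proof
    fix n :: nat
    obtain c where c: "c \<in> S" "Sup S - 1 / Suc n < c" using ex[of n] by blast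
    from c(1) have "AE x in Iv l. c \<le> f x" by (simp add: S_def)
    then show "AE x in Iv l. Sup S - 1 / Suc n \<le> f x" by eventually_elim (use c(2) in auto)
  qed
  then have "AE x in Iv l. \<forall>n::nat. Sup S - 1 / Suc n \<le> f x" by (simp add: AE_all_countable)
  then show ?thesis
  proof eventually_elim
    fix x assume h: "\<forall>n::nat. Sup S - 1 / Suc n \<le> f x"
    show "ess_inf l f \<le> f x" unfolding ess_inf_def S_def[symmetric]
    proof (rule field_le_epsilon)
      fix e :: real assume e: "0 < e"
      obtain n :: nat where "1 / Suc n < e" using e by (metis nat_approx_posE)
      then show "Sup S \<le> f x + e" using h[rule_format, of n] by linarith
    qed
  qed
qed

lemma ess_inf_ge:
  assumes f: "Linf l f" and l: "0 < l" and q: "AE x in Iv l. q \<le> f x"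
  shows "q \<le> ess_inf l f"
proof -
  define S where "S = {c. AE x in Iv l. c \<le> f x}"
  obtain C where C: "AE x in Iv l. \<bar>f x\<bar> \<le> C" using Linf_bdd[OF f] by blast
  have ub: "c \<le> C" if "c \<in> S" for c
  proof (rule ccontr)
    assume "\<not> c \<le> C"
    have "AE x in Iv l. False" using C that[unfolded S_def mem_Collect_eq] by eventually_elim (use \<open>\<not> c \<le> C\<close> in auto)
    then show False using Iv_nonnull[OF l] by simp
  qed
  have bdd: "bdd_above S" by (rule bdd_aboveI, rule ub)
  have "q \<in> S" unfolding S_def mem_Collect_eq by (rule q)
  then show ?thesis unfolding ess_inf_def S_def[symmetric] using bdd by (rule cSup_upper)
qed

lemma ess_inf_le_sup:
  assumes f: "Linf l f" and l: "0 < l"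
  shows "ess_inf l f \<le> ess_sup l f"
proof (rule ccontr)
  assume a: "\<not> ess_inf l f \<le> ess_sup l f"
  have "AE x in Iv l. False" using ess_inf_AE[OF f l] ess_sup_AE[OF f l]
    by eventually_elim (use a in auto)
  then show False using Iv_nonnull[OF l] by simp
qed

lemma Linf_mult:
  assumes "Linf l f" "Linf l g" shows "Linf l (\<lambda>x. f x * g x)"
proof -
  obtain C where C: "AE x in Iv l. \<bar>f x\<bar> \<le> C" using Linf_bdd[OF assms(1)] by blast
  obtain D where D: "AE x in Iv l. \<bar>g x\<bar> \<le> D" using Linf_bdd[OF assms(2)] by blast
  have "AE x in Iv l. \<bar>f x * g x\<bar> \<le> C * D" using C D
    by eventually_elim (simp add: abs_mult mult_mono')
  moreover have [measurable]: "f \<in> borel_measurable (Iv l)" "g \<in> borel_measurable (Iv l)" using assms unfolding Linf_def by auto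
  moreover have "(\<lambda>x. f x * g x) \<in> borel_measurable (Iv l)" by measurable
  ultimately show ?thesis unfolding Linf_def by blast
qed

lemma repH1:
  assumes "H1 l F"
  shows "AE x in Iv l. F x = rep l F x" "has_weak_deriv l (rep l F) (wderiv l F)"
proof -
  obtain Fr where "is_AC_rep l F Fr" using assms unfolding H1_def by blast
  then have r: "is_AC_rep l F (rep l F)" unfolding rep_def by (metis someI)
  then show "AE x in Iv l. F x = rep l F x" unfolding is_AC_rep_def by blast
  from r obtain G where "has_weak_deriv l (rep l F) G" unfolding is_AC_rep_def by blast
  then show "has_weak_deriv l (rep l F) (wderiv l F)" unfolding wderiv_def by (metis someI)
qed

lemma hwd_L2: "has_weak_deriv l F G \<Longrightarrow> L2 l G"
  unfolding has_weak_deriv_def by blast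

lemma H1_L2: "H1 l F \<Longrightarrow> L2 l F" unfolding H1_def by blast

lemma L2_meas: "L2 l f \<Longrightarrow> f \<in> borel_measurable (Iv l)" unfolding L2_def by blast
lemma Linf_meas: "Linf l f \<Longrightarrow> f \<in> borel_measurable (Iv l)" unfolding Linf_def by blast

lemma L2_mult:
  assumes "L2 l f" "L2 l g" shows "integrable (Iv l) (\<lambda>x. f x * g x)"
proof (rule Bochner_Integration.integrable_bound)
  show "integrable (Iv l) (\<lambda>x. (f x)\<^sup>2 + (g x)\<^sup>2)" using assms unfolding L2_def by auto
  have [measurable]: "f \<in> borel_measurable (Iv l)" "g \<in> borel_measurable (Iv l)" using assms unfolding L2_def by auto
  show "(\<lambda>x. f x * g x) \<in> borel_measurable (Iv l)" by measurable
  show "AE x in Iv l. norm (f x * g x) \<le> norm ((f x)\<^sup>2 + (g x)\<^sup>2)"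
  proof (rule AE_I2)
    fix x
    have "\<bar>f x * g x\<bar> \<le> (f x)\<^sup>2 + (g x)\<^sup>2"
    proof -
      have a: "2 * \<bar>f x\<bar> * \<bar>g x\<bar> \<le> \<bar>f x\<bar>\<^sup>2 + \<bar>g x\<bar>\<^sup>2" by (rule sum_squares_bound)
      have b: "0 \<le> \<bar>f x\<bar> * \<bar>g x\<bar>" by simp
      have a': "2 * \<bar>f x\<bar> * \<bar>g x\<bar> \<le> (f x)\<^sup>2 + (g x)\<^sup>2" using a by simp
      have "\<bar>f x\<bar> * \<bar>g x\<bar> \<le> (f x)\<^sup>2 + (g x)\<^sup>2" using a' b by linarith
      then show ?thesis by (simp add: abs_mult)
    qed
    then show "norm (f x * g x) \<le> norm ((f x)\<^sup>2 + (g x)\<^sup>2)" by simp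
  qed
qed

lemma Linf_int:
  assumes c: "Linf l c" and h: "integrable (Iv l) h" shows "integrable (Iv l) (\<lambda>x. c x * h x)"
proof -
  obtain C where C: "AE x in Iv l. \<bar>c x\<bar> \<le> C" using Linf_bdd[OF c] by blast
  show ?thesis
  proof (rule Bochner_Integration.integrable_bound)
    show "integrable (Iv l) (\<lambda>x. C * \<bar>h x\<bar>)" using h by simp
    show "(\<lambda>x. c x * h x) \<in> borel_measurable (Iv l)" using Linf_meas[OF c] h by measurable
    show "AE x in Iv l. norm (c x * h x) \<le> norm (C * \<bar>h x\<bar>)"
      using C
    proof eventually_elim
      fix x assume "\<bar>c x\<bar> \<le> C"
      then have "\<bar>c x\<bar> * \<bar>h x\<bar> \<le> C * \<bar>h x\<bar>" by (simp add: mult_right_mono)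
      moreover have "C \<ge> 0" using \<open>\<bar>c x\<bar> \<le> C\<close> by linarith
      ultimately show "norm (c x * h x) \<le> norm (C * \<bar>h x\<bar>)" by (simp add: abs_mult)
    qed
  qed
qed

lemma int3: "Linf l c \<Longrightarrow> L2 l u \<Longrightarrow> L2 l w \<Longrightarrow> integrable (Iv l) (\<lambda>x. c x * u x * w x)"
  using Linf_int[of l c "\<lambda>x. u x * w x"] L2_mult[of l u w] by (simp add: mult.assoc)

lemma int4: "Linf l c \<Longrightarrow> Linf l d \<Longrightarrow> L2 l u \<Longrightarrow> L2 l w \<Longrightarrow> integrable (Iv l) (\<lambda>x. c x * d x * u x * w x)"
  using int3[of l "\<lambda>x. c x * d x" u w] Linf_mult[of l c d] by simp

lemma pw_bend:
  fixes e \<eta> \<eta>b m \<epsilon> g f :: real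
  assumes e: "0 \<le> e" and h0: "0 \<le> \<eta>" and hb: "\<eta> \<le> \<eta>b" and m: "m \<le> \<eta> * e"
    and ep: "0 < \<epsilon>" and c: "\<epsilon> * \<eta>b \<le> 4"
  shows "- (\<eta> * e * g * g) - \<epsilon> * (e * f * f) - \<epsilon> * (\<eta> * e * g * f) \<le> - ((1 - \<epsilon> * \<eta>b / 4) * m) * (g * g)"
proof -
  have s1: "0 \<le> e * (f + \<eta> * g / 2)\<^sup>2" using e by simp
  have s1': "e * f * f + \<eta> * e * g * f \<ge> - (e * \<eta> * \<eta> * (g * g) / 4)"
    using s1 by (simp add: power2_eq_square algebra_simps)
  have gg: "0 \<le> g * g" by simp
  have he: "0 \<le> \<eta> * e" using e h0 by simp
  have s2: "e * \<eta> * \<eta> * (g * g) \<le> \<eta>b * (\<eta> * e) * (g * g)"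
  proof -
    have "\<eta> * (\<eta> * e) \<le> \<eta>b * (\<eta> * e)" using hb he by (rule mult_right_mono)
    from mult_right_mono[OF this gg] show ?thesis by (simp add: mult_ac)
  qed
  have s3: "\<epsilon> * (e * f * f) + \<epsilon> * (\<eta> * e * g * f) \<ge> - (\<epsilon> * (\<eta>b * (\<eta> * e) * (g * g)) / 4)"
  proof -
    have "\<epsilon> * (e * f * f + \<eta> * e * g * f) \<ge> \<epsilon> * (- (e * \<eta> * \<eta> * (g * g) / 4))"
      using mult_left_mono[OF s1' less_imp_le[OF ep]] .
    moreover have "\<epsilon> * (e * \<eta> * \<eta> * (g * g)) \<le> \<epsilon> * (\<eta>b * (\<eta> * e) * (g * g))"
      using mult_left_mono[OF s2 less_imp_le[OF ep]] .
    ultimately show ?thesis by (simp add: algebra_simps)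
  qed
  have c0: "0 \<le> 1 - \<epsilon> * \<eta>b / 4" using c by simp
  have s4: "(1 - \<epsilon> * \<eta>b / 4) * m * (g * g) \<le> (1 - \<epsilon> * \<eta>b / 4) * (\<eta> * e) * (g * g)"
    using mult_right_mono[OF mult_left_mono[OF m c0] gg] .
  have "- (\<eta> * e * g * g) - \<epsilon> * (e * f * f) - \<epsilon> * (\<eta> * e * g * f)
      \<le> - (\<eta> * e * (g * g)) + \<epsilon> * (\<eta>b * (\<eta> * e) * (g * g)) / 4"
    using s3 by (simp add: algebra_simps)
  also have "\<dots> = - ((1 - \<epsilon> * \<eta>b / 4) * (\<eta> * e) * (g * g))" by (simp add: algebra_simps)
  also have "\<dots> \<le> - ((1 - \<epsilon> * \<eta>b / 4) * m * (g * g))" using s4 by simp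
  finally show ?thesis by simp
qed

lemma wirt2:
  fixes g rg g1 rg1 g2 :: "real \<Rightarrow> real"
  assumes l: "0 < l" and a1: "acd l rg g1" and a2: "acd l rg1 g2" and r0: "rg 0 = 0" "rg1 0 = 0"
    and L: "L2 l g" "L2 l g1" "L2 l g2"
    and ae1: "AE x in Iv l. g x = rg x" and ae2: "AE x in Iv l. g1 x = rg1 x"
  shows "(\<integral>y. g y * g y \<partial>Iv l) \<le> (4 * l\<^sup>2 / pi\<^sup>2) * (4 * l\<^sup>2 / pi\<^sup>2) * (\<integral>y. g2 y * g2 y \<partial>Iv l)"
proof -
  define cw where "cw = 4 * l\<^sup>2 / pi\<^sup>2"
  have cw0: "cw \<ge> 0" unfolding cw_def by simp
  note [measurable] = L2_meas[OF L(1)] L2_meas[OF L(2)] L2_meas[OF L(3)] acd_meas[OF a1] acd_meas[OF a2]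
  have e1: "(\<integral>y. g y * g y \<partial>Iv l) = (\<integral>y. (rg y)\<^sup>2 \<partial>Iv l)"
    by (rule integral_cong_AE) (measurable, use ae1 in \<open>auto simp: power2_eq_square\<close>)
  have e2: "(\<integral>y. (g1 y)\<^sup>2 \<partial>Iv l) = (\<integral>y. (rg1 y)\<^sup>2 \<partial>Iv l)"
    by (rule integral_cong_AE) (measurable, use ae2 in auto)
  have w1: "(\<integral>y. (rg y)\<^sup>2 \<partial>Iv l) \<le> cw * (\<integral>y. (g1 y)\<^sup>2 \<partial>Iv l)"
    unfolding cw_def by (rule wirt[OF a1 l r0(1)]) (use L(2) in \<open>simp add: L2_def\<close>)
  have w2: "(\<integral>y. (rg1 y)\<^sup>2 \<partial>Iv l) \<le> cw * (\<integral>y. (g2 y)\<^sup>2 \<partial>Iv l)"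
    unfolding cw_def by (rule wirt[OF a2 l r0(2)]) (use L(3) in \<open>simp add: L2_def\<close>)
  have "(\<integral>y. g y * g y \<partial>Iv l) \<le> cw * (cw * (\<integral>y. (g2 y)\<^sup>2 \<partial>Iv l))"
  proof -
    have "cw * (\<integral>y. (g1 y)\<^sup>2 \<partial>Iv l) = cw * (\<integral>y. (rg1 y)\<^sup>2 \<partial>Iv l)" using e2 by simp
    then show ?thesis using e1 w1 mult_left_mono[OF w2 cw0] by linarith
  qed
  then show ?thesis unfolding cw_def by (simp add: power2_eq_square mult_ac)
qed

lemma wirt1:
  fixes z rz z1 :: "real \<Rightarrow> real"
  assumes l: "0 < l" and a1: "acd l rz z1" and r0: "rz 0 = 0"
    and L: "L2 l z" "L2 l z1" and ae1: "AE x in Iv l. z x = rz x"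
  shows "(\<integral>y. z y * z y \<partial>Iv l) \<le> (4 * l\<^sup>2 / pi\<^sup>2) * (\<integral>y. z1 y * z1 y \<partial>Iv l)"
proof -
  note [measurable] = L2_meas[OF L(1)] L2_meas[OF L(2)] acd_meas[OF a1]
  have e1: "(\<integral>y. z y * z y \<partial>Iv l) = (\<integral>y. (rz y)\<^sup>2 \<partial>Iv l)"
    by (rule integral_cong_AE) (measurable, use ae1 in \<open>auto simp: power2_eq_square\<close>)
  have w1: "(\<integral>y. (rz y)\<^sup>2 \<partial>Iv l) \<le> (4 * l\<^sup>2 / pi\<^sup>2) * (\<integral>y. (z1 y)\<^sup>2 \<partial>Iv l)"
    by (rule wirt[OF a1 l r0]) (use L(2) in \<open>simp add: L2_def\<close>)
  then show ?thesis using e1 by (simp add: power2_eq_square)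
qed

lemma ess_facts:
  assumes l: "0 < l" and f: "Linf l f" and p: "ess_inf l f > 0"
  shows "AE x in Iv l. 0 < f x" "AE x in Iv l. ess_inf l f \<le> f x" "AE x in Iv l. f x \<le> ess_sup l f"
    "ess_sup l f > 0"
proof -
  show a: "AE x in Iv l. ess_inf l f \<le> f x" by (rule ess_inf_AE[OF f l])
  then show "AE x in Iv l. 0 < f x" by eventually_elim (use p in auto)
  show "AE x in Iv l. f x \<le> ess_sup l f" by (rule ess_sup_AE[OF f l])
  show "ess_sup l f > 0" using ess_inf_le_sup[OF f l] p by linarith
qed

lemma prod_inf_pos:
  assumes l: "0 < l" and f: "Linf l f" "Linf l g" and p: "ess_inf l f > 0" "ess_inf l g > 0"
  shows "ess_inf l (\<lambda>y. f y * g y) > 0" "AE x in Iv l. ess_inf l (\<lambda>y. f y * g y) \<le> f x * g x"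
proof -
  have "AE x in Iv l. ess_inf l f * ess_inf l g \<le> f x * g x"
    using ess_inf_AE[OF f(1) l] ess_inf_AE[OF f(2) l]
    by eventually_elim (use p in \<open>auto intro: mult_mono\<close>)
  then have "ess_inf l f * ess_inf l g \<le> ess_inf l (\<lambda>y. f y * g y)"
    by (rule ess_inf_ge[OF Linf_mult[OF f] l])
  moreover have "ess_inf l f * ess_inf l g > 0" using p by simp
  ultimately show "ess_inf l (\<lambda>y. f y * g y) > 0" by linarith
  show "AE x in Iv l. ess_inf l (\<lambda>y. f y * g y) \<le> f x * g x"
    by (rule ess_inf_AE[OF Linf_mult[OF f] l])
qed

lemma bend:
  fixes \<rho> EI \<eta>w g g1 g2 f2 rg rg1 :: "real \<Rightarrow> real"
  assumes l: "0 < l" and Li: "Linf l \<rho>" "Linf l EI" "Linf l \<eta>w"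
    and pos: "ess_inf l \<rho> > 0" "ess_inf l EI > 0" "ess_inf l \<eta>w > 0"
    and ep: "\<epsilon> > 0" "\<epsilon> < eps1_star l \<rho> EI \<eta>w"
    and a1: "acd l rg g1" and a2: "acd l rg1 g2" and r0: "rg 0 = 0" "rg1 0 = 0"
    and L: "L2 l g" "L2 l g1" "L2 l g2" "L2 l f2"
    and ae1: "AE x in Iv l. g x = rg x" and ae2: "AE x in Iv l. g1 x = rg1 x"
  shows "- (\<integral>y. \<eta>w y * EI y * g2 y * g2 y \<partial>Iv l) - \<epsilon> * (\<integral>y. EI y * f2 y * f2 y \<partial>Iv l)
     - \<epsilon> * (\<integral>y. \<eta>w y * EI y * g2 y * f2 y \<partial>Iv l) + \<epsilon> * (\<integral>y. \<rho> y * g y * g y \<partial>Iv l) \<le> 0"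
proof -
  define m1 where "m1 = ess_inf l (\<lambda>y. \<eta>w y * EI y)"
  define hb where "hb = ess_sup l \<eta>w"
  define rb where "rb = ess_sup l \<rho>"
  define cw where "cw = 4 * l\<^sup>2 / pi\<^sup>2"
  note [measurable] = L2_meas[OF L(1)] L2_meas[OF L(2)] L2_meas[OF L(3)] L2_meas[OF L(4)]
    Linf_meas[OF Li(1)] Linf_meas[OF Li(2)] Linf_meas[OF Li(3)]
  have m1p: "m1 > 0" and aem: "AE x in Iv l. m1 \<le> \<eta>w x * EI x"
    unfolding m1_def using prod_inf_pos[OF l Li(3) Li(2) pos(3) pos(2)] by auto
  note fr = ess_facts[OF l Li(1) pos(1)]
  note fe = ess_facts[OF l Li(2) pos(2)]
  note fh = ess_facts[OF l Li(3) pos(3)]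
  have hbp: "hb > 0" unfolding hb_def by (rule fh(4))
  have rbp: "rb > 0" unfolding rb_def by (rule fr(4))
  define D where "D = 64 * l ^ 4 * rb + pi ^ 4 * hb * m1"
  have Dp: "D > 0" unfolding D_def using l rbp hbp m1p by (simp add: add_pos_pos)
  have epsD: "\<epsilon> * D < 4 * pi ^ 4 * m1"
    using ep(2) Dp unfolding eps1_star_def m1_def[symmetric] hb_def[symmetric] rb_def[symmetric] D_def[symmetric]
    by (simp add: pos_less_divide_eq)
  have ehb: "\<epsilon> * hb \<le> 4"
  proof -
    have "\<epsilon> * (pi ^ 4 * hb * m1) \<le> \<epsilon> * D" unfolding D_def using ep(1) l rbp
      by (intro mult_left_mono) auto
    then have "(\<epsilon> * hb) * (pi ^ 4 * m1) < 4 * (pi ^ 4 * m1)" using epsD by (simp add: mult_ac)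
    then show ?thesis using m1p by (simp add: mult_less_cancel_right)
  qed
  define G2 where "G2 = (\<integral>y. g2 y * g2 y \<partial>Iv l)"
  have G2p: "G2 \<ge> 0" unfolding G2_def by (rule integral_nonneg_AE) simp
  have i1: "integrable (Iv l) (\<lambda>y. \<eta>w y * EI y * g2 y * g2 y)" by (rule int4[OF Li(3) Li(2) L(3) L(3)])
  have i2: "integrable (Iv l) (\<lambda>y. EI y * f2 y * f2 y)" by (rule int3[OF Li(2) L(4) L(4)])
  have i3: "integrable (Iv l) (\<lambda>y. \<eta>w y * EI y * g2 y * f2 y)" by (rule int4[OF Li(3) Li(2) L(3) L(4)])
  have iG: "integrable (Iv l) (\<lambda>y. g2 y * g2 y)" by (rule L2_mult[OF L(3) L(3)])
  have ig: "integrable (Iv l) (\<lambda>y. g y * g y)" by (rule L2_mult[OF L(1) L(1)])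
  have ir: "integrable (Iv l) (\<lambda>y. \<rho> y * g y * g y)" by (rule int3[OF Li(1) L(1) L(1)])
  have P: "- (\<integral>y. \<eta>w y * EI y * g2 y * g2 y \<partial>Iv l) - \<epsilon> * (\<integral>y. EI y * f2 y * f2 y \<partial>Iv l)
     - \<epsilon> * (\<integral>y. \<eta>w y * EI y * g2 y * f2 y \<partial>Iv l) \<le> - ((1 - \<epsilon> * hb / 4) * m1) * G2"
  proof -
    have "- (\<integral>y. \<eta>w y * EI y * g2 y * g2 y \<partial>Iv l) - \<epsilon> * (\<integral>y. EI y * f2 y * f2 y \<partial>Iv l)
     - \<epsilon> * (\<integral>y. \<eta>w y * EI y * g2 y * f2 y \<partial>Iv l)
     = (\<integral>y. - (\<eta>w y * EI y * g2 y * g2 y) - \<epsilon> * (EI y * f2 y * f2 y) - \<epsilon> * (\<eta>w y * EI y * g2 y * f2 y) \<partial>Iv l)"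
      using i1 i2 i3 by simp
    also have "\<dots> \<le> (\<integral>y. - ((1 - \<epsilon> * hb / 4) * m1) * (g2 y * g2 y) \<partial>Iv l)"
    proof (rule integral_mono_AE)
      show "integrable (Iv l) (\<lambda>y. - (\<eta>w y * EI y * g2 y * g2 y) - \<epsilon> * (EI y * f2 y * f2 y) - \<epsilon> * (\<eta>w y * EI y * g2 y * f2 y))"
        using i1 i2 i3 by simp
      show "integrable (Iv l) (\<lambda>y. - ((1 - \<epsilon> * hb / 4) * m1) * (g2 y * g2 y))" using iG by simp
      show "AE y in Iv l. - (\<eta>w y * EI y * g2 y * g2 y) - \<epsilon> * (EI y * f2 y * f2 y) - \<epsilon> * (\<eta>w y * EI y * g2 y * f2 y)
          \<le> - ((1 - \<epsilon> * hb / 4) * m1) * (g2 y * g2 y)"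
        using fe(1) fh(1) fh(3) aem
      proof eventually_elim
        fix y assume h: "0 < EI y" "0 < \<eta>w y" "\<eta>w y \<le> ess_sup l \<eta>w" "m1 \<le> \<eta>w y * EI y"
        show "- (\<eta>w y * EI y * g2 y * g2 y) - \<epsilon> * (EI y * f2 y * f2 y) - \<epsilon> * (\<eta>w y * EI y * g2 y * f2 y)
          \<le> - ((1 - \<epsilon> * hb / 4) * m1) * (g2 y * g2 y)"
          by (rule pw_bend) (use h ep(1) ehb in \<open>auto simp: hb_def\<close>)
      qed
    qed
    also have "\<dots> = - ((1 - \<epsilon> * hb / 4) * m1) * G2" unfolding G2_def by simp
    finally show ?thesis .
  qed
  have R: "(\<integral>y. \<rho> y * g y * g y \<partial>Iv l) \<le> rb * (\<integral>y. g y * g y \<partial>Iv l)"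
  proof -
    have "(\<integral>y. \<rho> y * g y * g y \<partial>Iv l) \<le> (\<integral>y. rb * (g y * g y) \<partial>Iv l)"
    proof (rule integral_mono_AE)
      show "integrable (Iv l) (\<lambda>y. \<rho> y * g y * g y)" by (rule ir)
      show "integrable (Iv l) (\<lambda>y. rb * (g y * g y))" using ig by simp
      show "AE y in Iv l. \<rho> y * g y * g y \<le> rb * (g y * g y)"
        using fr(3)
      proof eventually_elim
        fix y assume "\<rho> y \<le> ess_sup l \<rho>"
        then have "\<rho> y * (g y * g y) \<le> rb * (g y * g y)" unfolding rb_def
          by (rule mult_right_mono) simp
        then show "\<rho> y * g y * g y \<le> rb * (g y * g y)" by (simp add: mult_ac)
      qed
    qed
    then show ?thesis by simp
  qed
  have W: "(\<integral>y. g y * g y \<partial>Iv l) \<le> cw * cw * G2"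
    unfolding cw_def G2_def by (rule wirt2[OF l a1 a2 r0 L(1-3) ae1 ae2])
  have R2: "\<epsilon> * (\<integral>y. \<rho> y * g y * g y \<partial>Iv l) \<le> \<epsilon> * (rb * (cw * cw * G2))"
  proof -
    have "(\<integral>y. \<rho> y * g y * g y \<partial>Iv l) \<le> rb * (cw * cw * G2)"
      using R mult_left_mono[OF W less_imp_le[OF rbp]] by linarith
    then show ?thesis using ep(1) by (simp add: mult_left_mono)
  qed
  have coef: "\<epsilon> * (rb * (cw * cw)) - (1 - \<epsilon> * hb / 4) * m1 \<le> 0"
  proof -
    have cwcw: "cw * cw = 16 * l ^ 4 / pi ^ 4" unfolding cw_def by (simp add: field_simps eval_nat_numeral)
    have "\<epsilon> * (rb * (cw * cw)) - (1 - \<epsilon> * hb / 4) * m1 = (\<epsilon> * D - 4 * pi ^ 4 * m1) / (4 * pi ^ 4)"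
      unfolding cwcw D_def by (simp add: field_simps)
    also have "\<dots> \<le> 0" using epsD by (simp add: divide_nonpos_pos)
    finally show ?thesis .
  qed
  have "- (\<integral>y. \<eta>w y * EI y * g2 y * g2 y \<partial>Iv l) - \<epsilon> * (\<integral>y. EI y * f2 y * f2 y \<partial>Iv l)
     - \<epsilon> * (\<integral>y. \<eta>w y * EI y * g2 y * f2 y \<partial>Iv l) + \<epsilon> * (\<integral>y. \<rho> y * g y * g y \<partial>Iv l)
     \<le> - ((1 - \<epsilon> * hb / 4) * m1) * G2 + \<epsilon> * (rb * (cw * cw * G2))" using P R2 by linarith
  also have "\<dots> = (\<epsilon> * (rb * (cw * cw)) - (1 - \<epsilon> * hb / 4) * m1) * G2" by (simp add: algebra_simps)
  also have "\<dots> \<le> 0" using coef G2p by (rule mult_nonpos_nonneg)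
  finally show ?thesis .
qed

lemma tors:
  fixes Iw GJ \<eta>p z z1 h1 rz :: "real \<Rightarrow> real"
  assumes l: "0 < l" and Li: "Linf l Iw" "Linf l GJ" "Linf l \<eta>p"
    and pos: "ess_inf l Iw > 0" "ess_inf l GJ > 0" "ess_inf l \<eta>p > 0"
    and ep: "\<epsilon> > 0" "\<epsilon> < eps2_star l Iw GJ \<eta>p"
    and a1: "acd l rz z1" and r0: "rz 0 = 0"
    and L: "L2 l z" "L2 l z1" "L2 l h1"
    and ae1: "AE x in Iv l. z x = rz x"
  shows "- (\<integral>y. \<eta>p y * GJ y * z1 y * z1 y \<partial>Iv l) - \<epsilon> * (\<integral>y. GJ y * h1 y * h1 y \<partial>Iv l)
     - \<epsilon> * (\<integral>y. \<eta>p y * GJ y * z1 y * h1 y \<partial>Iv l) + \<epsilon> * (\<integral>y. Iw y * z y * z y \<partial>Iv l) \<le> 0"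
proof -
  define m1 where "m1 = ess_inf l (\<lambda>y. \<eta>p y * GJ y)"
  define hb where "hb = ess_sup l \<eta>p"
  define rb where "rb = ess_sup l Iw"
  define cw where "cw = 4 * l\<^sup>2 / pi\<^sup>2"
  note [measurable] = L2_meas[OF L(1)] L2_meas[OF L(2)] L2_meas[OF L(3)]
    Linf_meas[OF Li(1)] Linf_meas[OF Li(2)] Linf_meas[OF Li(3)]
  have m1p: "m1 > 0" and aem: "AE x in Iv l. m1 \<le> \<eta>p x * GJ x"
    unfolding m1_def using prod_inf_pos[OF l Li(3) Li(2) pos(3) pos(2)] by auto
  note fr = ess_facts[OF l Li(1) pos(1)]
  note fe = ess_facts[OF l Li(2) pos(2)]
  note fh = ess_facts[OF l Li(3) pos(3)]
  have hbp: "hb > 0" unfolding hb_def by (rule fh(4))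
  have rbp: "rb > 0" unfolding rb_def by (rule fr(4))
  define D where "D = 16 * l\<^sup>2 * rb + pi\<^sup>2 * hb * m1"
  have Dp: "D > 0" unfolding D_def using l rbp hbp m1p by (simp add: add_pos_pos)
  have epsD: "\<epsilon> * D < 4 * pi\<^sup>2 * m1"
    using ep(2) Dp unfolding eps2_star_def m1_def[symmetric] hb_def[symmetric] rb_def[symmetric] D_def[symmetric]
    by (simp add: pos_less_divide_eq)
  have ehb: "\<epsilon> * hb \<le> 4"
  proof -
    have "\<epsilon> * (pi\<^sup>2 * hb * m1) \<le> \<epsilon> * D" unfolding D_def using ep(1) l rbp
      by (intro mult_left_mono) auto
    then have "(\<epsilon> * hb) * (pi\<^sup>2 * m1) < 4 * (pi\<^sup>2 * m1)" using epsD by (simp add: mult_ac)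
    then show ?thesis using m1p by (simp add: mult_less_cancel_right)
  qed
  define G2 where "G2 = (\<integral>y. z1 y * z1 y \<partial>Iv l)"
  have G2p: "G2 \<ge> 0" unfolding G2_def by (rule integral_nonneg_AE) simp
  have i1: "integrable (Iv l) (\<lambda>y. \<eta>p y * GJ y * z1 y * z1 y)" by (rule int4[OF Li(3) Li(2) L(2) L(2)])
  have i2: "integrable (Iv l) (\<lambda>y. GJ y * h1 y * h1 y)" by (rule int3[OF Li(2) L(3) L(3)])
  have i3: "integrable (Iv l) (\<lambda>y. \<eta>p y * GJ y * z1 y * h1 y)" by (rule int4[OF Li(3) Li(2) L(2) L(3)])
  have iG: "integrable (Iv l) (\<lambda>y. z1 y * z1 y)" by (rule L2_mult[OF L(2) L(2)])
  have ig: "integrable (Iv l) (\<lambda>y. z y * z y)" by (rule L2_mult[OF L(1) L(1)])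
  have ir: "integrable (Iv l) (\<lambda>y. Iw y * z y * z y)" by (rule int3[OF Li(1) L(1) L(1)])
  have P: "- (\<integral>y. \<eta>p y * GJ y * z1 y * z1 y \<partial>Iv l) - \<epsilon> * (\<integral>y. GJ y * h1 y * h1 y \<partial>Iv l)
     - \<epsilon> * (\<integral>y. \<eta>p y * GJ y * z1 y * h1 y \<partial>Iv l) \<le> - ((1 - \<epsilon> * hb / 4) * m1) * G2"
  proof -
    have "- (\<integral>y. \<eta>p y * GJ y * z1 y * z1 y \<partial>Iv l) - \<epsilon> * (\<integral>y. GJ y * h1 y * h1 y \<partial>Iv l)
     - \<epsilon> * (\<integral>y. \<eta>p y * GJ y * z1 y * h1 y \<partial>Iv l)
     = (\<integral>y. - (\<eta>p y * GJ y * z1 y * z1 y) - \<epsilon> * (GJ y * h1 y * h1 y) - \<epsilon> * (\<eta>p y * GJ y * z1 y * h1 y) \<partial>Iv l)"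
      using i1 i2 i3 by simp
    also have "\<dots> \<le> (\<integral>y. - ((1 - \<epsilon> * hb / 4) * m1) * (z1 y * z1 y) \<partial>Iv l)"
    proof (rule integral_mono_AE)
      show "integrable (Iv l) (\<lambda>y. - (\<eta>p y * GJ y * z1 y * z1 y) - \<epsilon> * (GJ y * h1 y * h1 y) - \<epsilon> * (\<eta>p y * GJ y * z1 y * h1 y))"
        using i1 i2 i3 by simp
      show "integrable (Iv l) (\<lambda>y. - ((1 - \<epsilon> * hb / 4) * m1) * (z1 y * z1 y))" using iG by simp
      show "AE y in Iv l. - (\<eta>p y * GJ y * z1 y * z1 y) - \<epsilon> * (GJ y * h1 y * h1 y) - \<epsilon> * (\<eta>p y * GJ y * z1 y * h1 y)
          \<le> - ((1 - \<epsilon> * hb / 4) * m1) * (z1 y * z1 y)"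
        using fe(1) fh(1) fh(3) aem
      proof eventually_elim
        fix y assume h: "0 < GJ y" "0 < \<eta>p y" "\<eta>p y \<le> ess_sup l \<eta>p" "m1 \<le> \<eta>p y * GJ y"
        show "- (\<eta>p y * GJ y * z1 y * z1 y) - \<epsilon> * (GJ y * h1 y * h1 y) - \<epsilon> * (\<eta>p y * GJ y * z1 y * h1 y)
          \<le> - ((1 - \<epsilon> * hb / 4) * m1) * (z1 y * z1 y)"
          by (rule pw_bend) (use h ep(1) ehb in \<open>auto simp: hb_def\<close>)
      qed
    qed
    also have "\<dots> = - ((1 - \<epsilon> * hb / 4) * m1) * G2" unfolding G2_def by simp
    finally show ?thesis .
  qed
  have R: "(\<integral>y. Iw y * z y * z y \<partial>Iv l) \<le> rb * (\<integral>y. z y * z y \<partial>Iv l)"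
  proof -
    have "(\<integral>y. Iw y * z y * z y \<partial>Iv l) \<le> (\<integral>y. rb * (z y * z y) \<partial>Iv l)"
    proof (rule integral_mono_AE)
      show "integrable (Iv l) (\<lambda>y. Iw y * z y * z y)" by (rule ir)
      show "integrable (Iv l) (\<lambda>y. rb * (z y * z y))" using ig by simp
      show "AE y in Iv l. Iw y * z y * z y \<le> rb * (z y * z y)"
        using fr(3)
      proof eventually_elim
        fix y assume "Iw y \<le> ess_sup l Iw"
        then have "Iw y * (z y * z y) \<le> rb * (z y * z y)" unfolding rb_def
          by (rule mult_right_mono) simp
        then show "Iw y * z y * z y \<le> rb * (z y * z y)" by (simp add: mult_ac)
      qed
    qed
    then show ?thesis by simp
  qed
  have W: "(\<integral>y. z y * z y \<partial>Iv l) \<le> cw * G2"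
    unfolding cw_def G2_def by (rule wirt1[OF l a1 r0 L(1-2) ae1])
  have R2: "\<epsilon> * (\<integral>y. Iw y * z y * z y \<partial>Iv l) \<le> \<epsilon> * (rb * (cw * G2))"
  proof -
    have "(\<integral>y. Iw y * z y * z y \<partial>Iv l) \<le> rb * (cw * G2)"
      using R mult_left_mono[OF W less_imp_le[OF rbp]] by linarith
    then show ?thesis using ep(1) by (simp add: mult_left_mono)
  qed
  have coef: "\<epsilon> * (rb * cw) - (1 - \<epsilon> * hb / 4) * m1 \<le> 0"
  proof -
    have "\<epsilon> * (rb * cw) - (1 - \<epsilon> * hb / 4) * m1 = (\<epsilon> * D - 4 * pi\<^sup>2 * m1) / (4 * pi\<^sup>2)"
      unfolding cw_def D_def by (simp add: field_simps)
    also have "\<dots> \<le> 0" using epsD by (simp add: divide_nonpos_pos)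
    finally show ?thesis .
  qed
  have "- (\<integral>y. \<eta>p y * GJ y * z1 y * z1 y \<partial>Iv l) - \<epsilon> * (\<integral>y. GJ y * h1 y * h1 y \<partial>Iv l)
     - \<epsilon> * (\<integral>y. \<eta>p y * GJ y * z1 y * h1 y \<partial>Iv l) + \<epsilon> * (\<integral>y. Iw y * z y * z y \<partial>Iv l)
     \<le> - ((1 - \<epsilon> * hb / 4) * m1) * G2 + \<epsilon> * (rb * (cw * G2))" using P R2 by linarith
  also have "\<dots> = (\<epsilon> * (rb * cw) - (1 - \<epsilon> * hb / 4) * m1) * G2" by (simp add: algebra_simps)
  also have "\<dots> \<le> 0" using coef G2p by (rule mult_nonpos_nonneg)
  finally show ?thesis .
qed

lemma core:
  fixes \<rho> Iw EI GJ \<eta>w \<eta>p f g h z f1 f2 g1 g2 h1 z1 M M1 M2 T T1 rf rf1 rg rg1 rh rz rM rM1 rT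
    :: "real \<Rightarrow> real"
  assumes l: "0 < l"
    and Li: "Linf l \<rho>" "Linf l Iw" "Linf l EI" "Linf l GJ" "Linf l \<eta>w" "Linf l \<eta>p"
    and pos: "ess_inf l \<rho> > 0" "ess_inf l Iw > 0" "ess_inf l EI > 0" "ess_inf l GJ > 0"
        "ess_inf l \<eta>w > 0" "ess_inf l \<eta>p > 0"
    and k: "k1 \<ge> 0" "k2 \<ge> 0"
    and e1: "\<epsilon>1 > 0" "\<epsilon>1 < eps1_star l \<rho> EI \<eta>w"
    and e2: "\<epsilon>2 > 0" "\<epsilon>2 < eps2_star l Iw GJ \<eta>p"
    and ac: "acd l rf f1" "acd l rf1 f2" "acd l rg g1" "acd l rg1 g2" "acd l rh h1" "acd l rz z1"
       "acd l rM M1" "acd l rM1 M2" "acd l rT T1"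
    and L: "L2 l f" "L2 l g" "L2 l h" "L2 l z" "L2 l f1" "L2 l f2" "L2 l g1" "L2 l g2" "L2 l h1" "L2 l z1"
       "L2 l M1" "L2 l M2" "L2 l T1"
    and ae: "AE x in Iv l. f x = rf x" "AE x in Iv l. g x = rg x" "AE x in Iv l. g1 x = rg1 x"
       "AE x in Iv l. f1 x = rf1 x" "AE x in Iv l. h x = rh x" "AE x in Iv l. z x = rz x"
       "AE x in Iv l. M x = rM x" "AE x in Iv l. M1 x = rM1 x" "AE x in Iv l. T x = rT x"
    and Md: "\<And>y. M y = EI y * f2 y + \<eta>w y * EI y * g2 y"
    and Td: "\<And>y. T y = GJ y * h1 y + \<eta>p y * GJ y * z1 y"
    and bc: "rf 0 = 0" "rf1 0 = 0" "rg 0 = 0" "rg1 0 = 0" "rh 0 = 0" "rz 0 = 0" "rM l = 0"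
       "rM1 l = k1 * (rg l + \<epsilon>1 * rf l)" "rT l = - k2 * (rz l + \<epsilon>2 * rh l)"
  shows "(\<integral>y. EI y * g2 y * f2 y + \<rho> y * (- (1 / \<rho> y) * M2 y) * g y + GJ y * z1 y * h1 y
            + Iw y * (1 / Iw y * T1 y) * z y \<partial>Iv l)
      + (\<epsilon>1 * (\<integral>y. \<rho> y * (g y * g y + - (1 / \<rho> y) * M2 y * f y) \<partial>Iv l)
       + \<epsilon>2 * (\<integral>y. Iw y * (z y * z y + 1 / Iw y * T1 y * h y) \<partial>Iv l)) \<le> 0"
proof -
  note [measurable] = L2_meas[OF L(1)] L2_meas[OF L(2)] L2_meas[OF L(3)] L2_meas[OF L(4)]
    L2_meas[OF L(5)] L2_meas[OF L(6)] L2_meas[OF L(7)] L2_meas[OF L(8)] L2_meas[OF L(9)]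
    L2_meas[OF L(10)] L2_meas[OF L(11)] L2_meas[OF L(12)] L2_meas[OF L(13)]
    Linf_meas[OF Li(1)] Linf_meas[OF Li(2)] Linf_meas[OF Li(3)] Linf_meas[OF Li(4)]
    Linf_meas[OF Li(5)] Linf_meas[OF Li(6)]
    acd_meas[OF ac(1)] acd_meas[OF ac(2)] acd_meas[OF ac(3)] acd_meas[OF ac(4)] acd_meas[OF ac(5)]
    acd_meas[OF ac(6)] acd_meas[OF ac(7)] acd_meas[OF ac(8)] acd_meas[OF ac(9)]
  have Mm[measurable]: "M \<in> borel_measurable (Iv l)"
  proof -
    have Meq: "M = (\<lambda>y. EI y * f2 y + \<eta>w y * EI y * g2 y)" by (rule ext) (rule Md)
    show ?thesis unfolding Meq by measurable
  qed
  have Tm[measurable]: "T \<in> borel_measurable (Iv l)"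
  proof -
    have Teq: "T = (\<lambda>y. GJ y * h1 y + \<eta>p y * GJ y * z1 y)" by (rule ext) (rule Td)
    show ?thesis unfolding Teq by measurable
  qed
  have rhop: "AE x in Iv l. 0 < \<rho> x" by (rule ess_facts(1)[OF l Li(1) pos(1)])
  have Iwp: "AE x in Iv l. 0 < Iw x" by (rule ess_facts(1)[OF l Li(2) pos(2)])
  have J1: "(\<integral>y. EI y * g2 y * f2 y + \<rho> y * (- (1 / \<rho> y) * M2 y) * g y + GJ y * z1 y * h1 y
            + Iw y * (1 / Iw y * T1 y) * z y \<partial>Iv l)
     = (\<integral>y. EI y * g2 y * f2 y - M2 y * g y + GJ y * z1 y * h1 y + T1 y * z y \<partial>Iv l)"
    by (rule integral_cong_AE) (measurable, use rhop Iwp in \<open>eventually_elim, simp\<close>)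
  have J2: "(\<integral>y. \<rho> y * (g y * g y + - (1 / \<rho> y) * M2 y * f y) \<partial>Iv l)
     = (\<integral>y. \<rho> y * g y * g y - M2 y * f y \<partial>Iv l)"
    by (rule integral_cong_AE) (measurable, use rhop in \<open>eventually_elim, simp add: algebra_simps\<close>)
  have J3: "(\<integral>y. Iw y * (z y * z y + 1 / Iw y * T1 y * h y) \<partial>Iv l)
     = (\<integral>y. Iw y * z y * z y + T1 y * h y \<partial>Iv l)"
    by (rule integral_cong_AE) (measurable, use Iwp in \<open>eventually_elim, simp add: algebra_simps\<close>)
  have iA: "integrable (Iv l) (\<lambda>y. EI y * g2 y * f2 y)" by (rule int3[OF Li(3) L(8) L(6)])
  have iC: "integrable (Iv l) (\<lambda>y. GJ y * z1 y * h1 y)" by (rule int3[OF Li(4) L(10) L(9)])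
  have iR: "integrable (Iv l) (\<lambda>y. \<rho> y * g y * g y)" by (rule int3[OF Li(1) L(2) L(2)])
  have iQ: "integrable (Iv l) (\<lambda>y. Iw y * z y * z y)" by (rule int3[OF Li(2) L(4) L(4)])
  have iM2g: "integrable (Iv l) (\<lambda>y. M2 y * g y)" by (rule L2_mult[OF L(12) L(2)])
  have iM2f: "integrable (Iv l) (\<lambda>y. M2 y * f y)" by (rule L2_mult[OF L(12) L(1)])
  have iT1z: "integrable (Iv l) (\<lambda>y. T1 y * z y)" by (rule L2_mult[OF L(13) L(4)])
  have iT1h: "integrable (Iv l) (\<lambda>y. T1 y * h y)" by (rule L2_mult[OF L(13) L(3)])
  have S1: "(\<integral>y. EI y * g2 y * f2 y - M2 y * g y + GJ y * z1 y * h1 y + T1 y * z y \<partial>Iv l)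
     = (\<integral>y. EI y * g2 y * f2 y \<partial>Iv l) - (\<integral>y. M2 y * g y \<partial>Iv l) + (\<integral>y. GJ y * z1 y * h1 y \<partial>Iv l)
       + (\<integral>y. T1 y * z y \<partial>Iv l)"
    using iA iC iM2g iT1z by simp
  have S2: "(\<integral>y. \<rho> y * g y * g y - M2 y * f y \<partial>Iv l) = (\<integral>y. \<rho> y * g y * g y \<partial>Iv l) - (\<integral>y. M2 y * f y \<partial>Iv l)"
    using iR iM2f by simp
  have S3: "(\<integral>y. Iw y * z y * z y + T1 y * h y \<partial>Iv l) = (\<integral>y. Iw y * z y * z y \<partial>Iv l) + (\<integral>y. T1 y * h y \<partial>Iv l)"
    using iQ iT1h by simp
  have ib1: "(\<integral>x. M2 x * rg x \<partial>Iv l) + (\<integral>x. rM1 x * g1 x \<partial>Iv l) = rM1 l * rg l - rM1 0 * rg 0"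
    by (rule ibp(3)[OF ac(8) ac(3) l])
  have ib2: "(\<integral>x. M1 x * rg1 x \<partial>Iv l) + (\<integral>x. rM x * g2 x \<partial>Iv l) = rM l * rg1 l - rM 0 * rg1 0"
    by (rule ibp(3)[OF ac(7) ac(4) l])
  have ib3: "(\<integral>x. M2 x * rf x \<partial>Iv l) + (\<integral>x. rM1 x * f1 x \<partial>Iv l) = rM1 l * rf l - rM1 0 * rf 0"
    by (rule ibp(3)[OF ac(8) ac(1) l])
  have ib4: "(\<integral>x. M1 x * rf1 x \<partial>Iv l) + (\<integral>x. rM x * f2 x \<partial>Iv l) = rM l * rf1 l - rM 0 * rf1 0"
    by (rule ibp(3)[OF ac(7) ac(2) l])
  have ib5: "(\<integral>x. T1 x * rz x \<partial>Iv l) + (\<integral>x. rT x * z1 x \<partial>Iv l) = rT l * rz l - rT 0 * rz 0"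
    by (rule ibp(3)[OF ac(9) ac(6) l])
  have ib6: "(\<integral>x. T1 x * rh x \<partial>Iv l) + (\<integral>x. rT x * h1 x \<partial>Iv l) = rT l * rh l - rT 0 * rh 0"
    by (rule ibp(3)[OF ac(9) ac(5) l])
  have c1: "(\<integral>x. M2 x * rg x \<partial>Iv l) = (\<integral>x. M2 x * g x \<partial>Iv l)"
    by (rule integral_cong_AE) (measurable, use ae(2) in \<open>eventually_elim, simp\<close>)
  have c2: "(\<integral>x. rM1 x * g1 x \<partial>Iv l) = (\<integral>x. M1 x * g1 x \<partial>Iv l)"
    by (rule integral_cong_AE) (measurable, use ae(8) in \<open>eventually_elim, simp\<close>)
  have c3: "(\<integral>x. M1 x * rg1 x \<partial>Iv l) = (\<integral>x. M1 x * g1 x \<partial>Iv l)"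
    by (rule integral_cong_AE) (measurable, use ae(3) in \<open>eventually_elim, simp\<close>)
  have c4: "(\<integral>x. rM x * g2 x \<partial>Iv l) = (\<integral>x. M x * g2 x \<partial>Iv l)"
    by (rule integral_cong_AE) (measurable, use ae(7) in \<open>eventually_elim, simp\<close>)
  have c5: "(\<integral>x. M2 x * rf x \<partial>Iv l) = (\<integral>x. M2 x * f x \<partial>Iv l)"
    by (rule integral_cong_AE) (measurable, use ae(1) in \<open>eventually_elim, simp\<close>)
  have c6: "(\<integral>x. rM1 x * f1 x \<partial>Iv l) = (\<integral>x. M1 x * f1 x \<partial>Iv l)"
    by (rule integral_cong_AE) (measurable, use ae(8) in \<open>eventually_elim, simp\<close>)
  have c7: "(\<integral>x. M1 x * rf1 x \<partial>Iv l) = (\<integral>x. M1 x * f1 x \<partial>Iv l)"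
    by (rule integral_cong_AE) (measurable, use ae(4) in \<open>eventually_elim, simp\<close>)
  have c8: "(\<integral>x. rM x * f2 x \<partial>Iv l) = (\<integral>x. M x * f2 x \<partial>Iv l)"
    by (rule integral_cong_AE) (measurable, use ae(7) in \<open>eventually_elim, simp\<close>)
  have c9: "(\<integral>x. T1 x * rz x \<partial>Iv l) = (\<integral>x. T1 x * z x \<partial>Iv l)"
    by (rule integral_cong_AE) (measurable, use ae(6) in \<open>eventually_elim, simp\<close>)
  have c10: "(\<integral>x. rT x * z1 x \<partial>Iv l) = (\<integral>x. T x * z1 x \<partial>Iv l)"
    by (rule integral_cong_AE) (measurable, use ae(9) in \<open>eventually_elim, simp\<close>)
  have c11: "(\<integral>x. T1 x * rh x \<partial>Iv l) = (\<integral>x. T1 x * h x \<partial>Iv l)"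
    by (rule integral_cong_AE) (measurable, use ae(5) in \<open>eventually_elim, simp\<close>)
  have c12: "(\<integral>x. rT x * h1 x \<partial>Iv l) = (\<integral>x. T x * h1 x \<partial>Iv l)"
    by (rule integral_cong_AE) (measurable, use ae(9) in \<open>eventually_elim, simp\<close>)
  have E1: "(\<integral>x. M2 x * g x \<partial>Iv l) = rM1 l * rg l + (\<integral>x. M x * g2 x \<partial>Iv l)"
    using ib1 ib2 c1 c2 c3 c4 bc by simp
  have E2: "(\<integral>x. M2 x * f x \<partial>Iv l) = rM1 l * rf l + (\<integral>x. M x * f2 x \<partial>Iv l)"
    using ib3 ib4 c5 c6 c7 c8 bc by simp
  have E3: "(\<integral>x. T1 x * z x \<partial>Iv l) = rT l * rz l - (\<integral>x. T x * z1 x \<partial>Iv l)"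
    using ib5 c9 c10 bc by simp
  have E4: "(\<integral>x. T1 x * h x \<partial>Iv l) = rT l * rh l - (\<integral>x. T x * h1 x \<partial>Iv l)"
    using ib6 c11 c12 bc by simp
  have i_a2: "integrable (Iv l) (\<lambda>y. \<eta>w y * EI y * g2 y * g2 y)" by (rule int4[OF Li(5) Li(3) L(8) L(8)])
  have i_a3: "integrable (Iv l) (\<lambda>y. EI y * f2 y * f2 y)" by (rule int3[OF Li(3) L(6) L(6)])
  have i_a4: "integrable (Iv l) (\<lambda>y. \<eta>w y * EI y * g2 y * f2 y)" by (rule int4[OF Li(5) Li(3) L(8) L(6)])
  have i_b2: "integrable (Iv l) (\<lambda>y. \<eta>p y * GJ y * z1 y * z1 y)" by (rule int4[OF Li(6) Li(4) L(10) L(10)])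
  have i_b3: "integrable (Iv l) (\<lambda>y. GJ y * h1 y * h1 y)" by (rule int3[OF Li(4) L(9) L(9)])
  have i_b4: "integrable (Iv l) (\<lambda>y. \<eta>p y * GJ y * z1 y * h1 y)" by (rule int4[OF Li(6) Li(4) L(10) L(9)])
  have X1: "(\<integral>x. M x * g2 x \<partial>Iv l) = (\<integral>y. EI y * g2 y * f2 y \<partial>Iv l) + (\<integral>y. \<eta>w y * EI y * g2 y * g2 y \<partial>Iv l)"
  proof -
    have "(\<integral>x. M x * g2 x \<partial>Iv l) = (\<integral>y. EI y * g2 y * f2 y + \<eta>w y * EI y * g2 y * g2 y \<partial>Iv l)"
      by (rule Bochner_Integration.integral_cong) (auto simp: Md algebra_simps)
    then show ?thesis using iA i_a2 by simp
  qed
  have X2: "(\<integral>x. M x * f2 x \<partial>Iv l) = (\<integral>y. EI y * f2 y * f2 y \<partial>Iv l) + (\<integral>y. \<eta>w y * EI y * g2 y * f2 y \<partial>Iv l)"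
  proof -
    have "(\<integral>x. M x * f2 x \<partial>Iv l) = (\<integral>y. EI y * f2 y * f2 y + \<eta>w y * EI y * g2 y * f2 y \<partial>Iv l)"
      by (rule Bochner_Integration.integral_cong) (auto simp: Md algebra_simps)
    then show ?thesis using i_a3 i_a4 by simp
  qed
  have X3: "(\<integral>x. T x * z1 x \<partial>Iv l) = (\<integral>y. GJ y * z1 y * h1 y \<partial>Iv l) + (\<integral>y. \<eta>p y * GJ y * z1 y * z1 y \<partial>Iv l)"
  proof -
    have "(\<integral>x. T x * z1 x \<partial>Iv l) = (\<integral>y. GJ y * z1 y * h1 y + \<eta>p y * GJ y * z1 y * z1 y \<partial>Iv l)"
      by (rule Bochner_Integration.integral_cong) (auto simp: Td algebra_simps)
    then show ?thesis using iC i_b2 by simp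
  qed
  have X4: "(\<integral>x. T x * h1 x \<partial>Iv l) = (\<integral>y. GJ y * h1 y * h1 y \<partial>Iv l) + (\<integral>y. \<eta>p y * GJ y * z1 y * h1 y \<partial>Iv l)"
  proof -
    have "(\<integral>x. T x * h1 x \<partial>Iv l) = (\<integral>y. GJ y * h1 y * h1 y + \<eta>p y * GJ y * z1 y * h1 y \<partial>Iv l)"
      by (rule Bochner_Integration.integral_cong) (auto simp: Td algebra_simps)
    then show ?thesis using i_b3 i_b4 by simp
  qed
  have BE: "- (\<integral>y. \<eta>w y * EI y * g2 y * g2 y \<partial>Iv l) - \<epsilon>1 * (\<integral>y. EI y * f2 y * f2 y \<partial>Iv l)
     - \<epsilon>1 * (\<integral>y. \<eta>w y * EI y * g2 y * f2 y \<partial>Iv l) + \<epsilon>1 * (\<integral>y. \<rho> y * g y * g y \<partial>Iv l) \<le> 0"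
    by (rule bend[OF l Li(1) Li(3) Li(5) pos(1) pos(3) pos(5) e1 ac(3) ac(4) bc(3) bc(4)
          L(2) L(7) L(8) L(6) ae(2) ae(3)])
  have TO: "- (\<integral>y. \<eta>p y * GJ y * z1 y * z1 y \<partial>Iv l) - \<epsilon>2 * (\<integral>y. GJ y * h1 y * h1 y \<partial>Iv l)
     - \<epsilon>2 * (\<integral>y. \<eta>p y * GJ y * z1 y * h1 y \<partial>Iv l) + \<epsilon>2 * (\<integral>y. Iw y * z y * z y \<partial>Iv l) \<le> 0"
    by (rule tors[OF l Li(2) Li(4) Li(6) pos(2) pos(4) pos(6) e2 ac(6) bc(6) L(4) L(10) L(9) ae(6)])
  have bd1: "rM1 l * rg l + \<epsilon>1 * (rM1 l * rf l) = k1 * (rg l + \<epsilon>1 * rf l)\<^sup>2"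
    unfolding bc(8) by (simp add: power2_eq_square algebra_simps)
  have bd1p: "k1 * (rg l + \<epsilon>1 * rf l)\<^sup>2 \<ge> 0" using k by simp
  have bd2: "rT l * rz l + \<epsilon>2 * (rT l * rh l) = - (k2 * (rz l + \<epsilon>2 * rh l)\<^sup>2)"
    unfolding bc(9) by (simp add: power2_eq_square algebra_simps)
  have bd2p: "k2 * (rz l + \<epsilon>2 * rh l)\<^sup>2 \<ge> 0" using k by simp
  have P2: "\<epsilon>1 * (\<integral>y. \<rho> y * (g y * g y + - (1 / \<rho> y) * M2 y * f y) \<partial>Iv l)
     = \<epsilon>1 * (\<integral>y. \<rho> y * g y * g y \<partial>Iv l) - \<epsilon>1 * (rM1 l * rf l)
       - \<epsilon>1 * (\<integral>y. EI y * f2 y * f2 y \<partial>Iv l) - \<epsilon>1 * (\<integral>y. \<eta>w y * EI y * g2 y * f2 y \<partial>Iv l)"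
    unfolding J2 S2 E2 X2 by (simp add: algebra_simps)
  have P3: "\<epsilon>2 * (\<integral>y. Iw y * (z y * z y + 1 / Iw y * T1 y * h y) \<partial>Iv l)
     = \<epsilon>2 * (\<integral>y. Iw y * z y * z y \<partial>Iv l) + \<epsilon>2 * (rT l * rh l)
       - \<epsilon>2 * (\<integral>y. GJ y * h1 y * h1 y \<partial>Iv l) - \<epsilon>2 * (\<integral>y. \<eta>p y * GJ y * z1 y * h1 y \<partial>Iv l)"
    unfolding J3 S3 E4 X4 by (simp add: algebra_simps)
  show ?thesis
    unfolding J1 S1 E1 E3 X1 X3 P2 P3
    using BE TO bd1 bd1p bd2 bd2p by linarith
qed

theorem lemma4:
  fixes l k1 k2 \<epsilon>1 \<epsilon>2 :: real
    and \<rho> Iw EI GJ \<eta>w \<eta>p :: "real \<Rightarrow> real"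
  assumes "l > 0"
    and "Linf l \<rho>" "Linf l Iw" "Linf l EI" "Linf l GJ" "Linf l \<eta>w" "Linf l \<eta>p"
    and "ess_inf l \<rho> > 0" "ess_inf l Iw > 0" "ess_inf l EI > 0" "ess_inf l GJ > 0"
        "ess_inf l \<eta>w > 0" "ess_inf l \<eta>p > 0"
    and "k1 \<ge> 0" "k2 \<ge> 0"
    and "\<epsilon>1 > 0" "\<epsilon>1 < min (eps1_star l \<rho> EI \<eta>w) (1 / Km l \<rho> Iw EI GJ)"
    and "\<epsilon>2 > 0" "\<epsilon>2 < min (eps2_star l Iw GJ \<eta>p) (1 / Km l \<rho> Iw EI GJ)"
    and "X \<in> DA1 l EI GJ \<eta>w \<eta>p k1 k2 \<epsilon>1 \<epsilon>2"
  shows "ip2 l EI \<rho> GJ Iw \<epsilon>1 \<epsilon>2 (A1 l \<rho> Iw EI GJ \<eta>w \<eta>p X) X \<le> 0"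
proof -
  obtain f g h z where X: "X = (f, g, h, z)" by (cases X) auto
  define M where "M = Mom l EI \<eta>w (f, g, h, z)"
  define T where "T = Tor l GJ \<eta>p (f, g, h, z)"
  have D: "H2 l f" "L2 l g" "H1 l h" "L2 l z" "rep l f 0 = 0" "rep l (wderiv l f) 0 = 0" "rep l h 0 = 0"
    "H2 l g" "H1 l z" "H2 l M" "H1 l T" "rep l g 0 = 0" "rep l (wderiv l g) 0 = 0" "rep l z 0 = 0"
    "rep l M l = 0" "rep l (wderiv l M) l = k1 * (rep l g l + \<epsilon>1 * rep l f l)"
    "rep l T l = - k2 * (rep l z l + \<epsilon>2 * rep l h l)"
    using assms(20) unfolding DA1_def Hspace_def X by (auto simp: M_def T_def)
  have Hf: "H1 l f" "H1 l (wderiv l f)" using D(1) unfolding H2_def by auto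
  have Hg: "H1 l g" "H1 l (wderiv l g)" using D(8) unfolding H2_def by auto
  have HM: "H1 l M" "H1 l (wderiv l M)" using D(10) unfolding H2_def by auto
  note rf = repH1[OF Hf(1)] and rf1 = repH1[OF Hf(2)] and rg = repH1[OF Hg(1)] and rg1 = repH1[OF Hg(2)]
    and rh = repH1[OF D(3)] and rz = repH1[OF D(9)] and rM = repH1[OF HM(1)] and rM1 = repH1[OF HM(2)]
    and rT = repH1[OF D(11)]
  have e1: "\<epsilon>1 < eps1_star l \<rho> EI \<eta>w" using assms(17) by simp
  have e2: "\<epsilon>2 < eps2_star l Iw GJ \<eta>p" using assms(19) by simp
  have Md: "\<And>y. M y = EI y * wderiv l (wderiv l f) y + \<eta>w y * EI y * wderiv l (wderiv l g) y"
    by (simp add: M_def Mom_def)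
  have Td: "\<And>y. T y = GJ y * wderiv l h y + \<eta>p y * GJ y * wderiv l z y"
    by (simp add: T_def Tor_def)
  have main: "(\<integral>y. EI y * wderiv l (wderiv l g) y * wderiv l (wderiv l f) y
        + \<rho> y * (- (1 / \<rho> y) * wderiv l (wderiv l M) y) * g y + GJ y * wderiv l z y * wderiv l h y
            + Iw y * (1 / Iw y * wderiv l T y) * z y \<partial>Iv l)
      + (\<epsilon>1 * (\<integral>y. \<rho> y * (g y * g y + - (1 / \<rho> y) * wderiv l (wderiv l M) y * f y) \<partial>Iv l)
       + \<epsilon>2 * (\<integral>y. Iw y * (z y * z y + 1 / Iw y * wderiv l T y * h y) \<partial>Iv l)) \<le> 0"
    by (rule core[OF assms(1-16) e1 assms(18) e2
        hwd_acd[OF rf(2)] hwd_acd[OF rf1(2)] hwd_acd[OF rg(2)] hwd_acd[OF rg1(2)]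
        hwd_acd[OF rh(2)] hwd_acd[OF rz(2)] hwd_acd[OF rM(2)] hwd_acd[OF rM1(2)] hwd_acd[OF rT(2)]
        H1_L2[OF Hf(1)] D(2) H1_L2[OF D(3)] D(4) hwd_L2[OF rf(2)] hwd_L2[OF rf1(2)]
        hwd_L2[OF rg(2)] hwd_L2[OF rg1(2)] hwd_L2[OF rh(2)] hwd_L2[OF rz(2)]
        hwd_L2[OF rM(2)] hwd_L2[OF rM1(2)] hwd_L2[OF rT(2)]
        rf(1) rg(1) rg1(1) rf1(1) rh(1) rz(1) rM(1) rM1(1) rT(1) Md Td
        D(5) D(6) D(12) D(13) D(7) D(14) D(15) D(16) D(17)])
  show ?thesis
    unfolding X ip2_def ip1_def A1_def prod.case M_def[symmetric] T_def[symmetric]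
    by (rule main)
qed

end
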